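(* Let $X$ satisfy the IHR assumption with hazard-rate lower bound $L>0$, let $n\ge 2$, let $X_1,\dots,X_n$ be i.i.d. copies of $X$ with order statistics $X_{(1)}\ge\cdots\ge X_{(n)}$, and let $k\in\{1,\dots,n-1\}$. Define $v^r:=\frac{2}{kL^2}$ and $c^r:=\frac{2}{kL}$. Then for all $\lambda\in[0,1/c^r)$, $$\log \mathbb{E}\big[\exp\big(\lambda(X_{(k)}-\mathbb{E}[X_{(k)}])\big)\big]\le \frac{\lambda^2 v^r}{2(1-c^r\lambda)},$$ and for all $\gamma\ge 0$, $$\mathbb{P}\Big(X_{(k)}-\mathbb{E}[X_{(k)}]\ge \sqrt{2v^r\gamma}+c^r\gamma\Big)\le e^{-\gamma}.$$
   Context: $X$ is a continuous real random variable with support $[0,\infty)$, density $f$ and c.d.f. $F$. Its hazard rate is $h(x)=f(x)/(1-F(x))$. IHR assumption: $h$ is non-decreasing on $[0,\infty)$ (i.e. $h(x_1)\ge h(x_2)$ whenever $x_1\ge x_2\ge 0$) and $L:=\inf_x h(x)>0$. For i.i.d. samples $X_1,\dots,X_n$, the order statistics $X_{(1)}\ge X_{(2)}\ge\cdots\ge X_{(n)}$ are the samples sorted in decreasing order ($X_{(1)}$ is the maximum); $X_{(k)}$ is called the rank-$k$ order statistic. *)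

theory Defs
  imports "HOL-Probability.Probability"
begin

text \<open>The rank-k order statistic (k-th largest, k = 1 is the maximum) of the
  n values x 0, ..., x (n-1).\<close>
definition order_stat :: "nat \<Rightarrow> nat \<Rightarrow> (nat \<Rightarrow> real) \<Rightarrow> real" where
  "order_stat n k x = rev (sort (map x [0..<n])) ! (k - 1)"

definition hazard :: "(real \<Rightarrow> real) \<Rightarrow> (real \<Rightarrow> real) \<Rightarrow> real \<Rightarrow> real" where
  "hazard f F x = f x / (1 - F x)"

end

theory Submission
  imports Defs
begin

lemma sorted_nth_ge_iff:
  fixes ys :: "real list"
  assumes "sorted ys" "i < length ys"
  shows "(t \<le> ys ! i) \<longleftrightarrow> length ys - i \<le> length (filter (\<lambda>x. t \<le> x) ys)"
proof -
  define m where "m = length (takeWhile (\<lambda>x. x < t) ys)"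
  have lenTD: "length (takeWhile (\<lambda>x. x < t) ys) + length (dropWhile (\<lambda>x. x < t) ys) = length ys"
    by (metis length_append takeWhile_dropWhile_id)
  have split: "ys = takeWhile (\<lambda>x. x < t) ys @ dropWhile (\<lambda>x. x < t) ys" by simp
  have dw: "\<forall>x\<in>set (dropWhile (\<lambda>x. x < t) ys). t \<le> x"
  proof
    fix x assume x: "x \<in> set (dropWhile (\<lambda>x. x < t) ys)"
    show "t \<le> x"
    proof (cases "dropWhile (\<lambda>x. x < t) ys")
      case Nil then show ?thesis using x by (metis empty_iff list.set(1))
    next
      case (Cons a as)
      have "\<not> a < t" using Cons by (simp add: dropWhile_eq_Cons_conv)
      moreover have "sorted (dropWhile (\<lambda>x. x < t) ys)" using assms(1) by (simp add: sorted_dropWhile)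
      ultimately show ?thesis using x Cons by auto
    qed
  qed
  have tw: "\<forall>x\<in>set (takeWhile (\<lambda>x. x < t) ys). x < t" by (meson set_takeWhileD)
  have flt: "filter (\<lambda>x. t \<le> x) ys = dropWhile (\<lambda>x. x < t) ys"
  proof -
    have "filter (\<lambda>x. t \<le> x) ys = filter (\<lambda>x. t \<le> x) (takeWhile (\<lambda>x. x < t) ys) @ filter (\<lambda>x. t \<le> x) (dropWhile (\<lambda>x. x < t) ys)"
      using filter_append[of "\<lambda>x. t \<le> x" "takeWhile (\<lambda>x. x<t) ys" "dropWhile (\<lambda>x. x<t) ys"] by simp
    moreover have "filter (\<lambda>x. t \<le> x) (takeWhile (\<lambda>x. x < t) ys) = []"
      using tw by (auto simp: filter_empty_conv)
    moreover have "filter (\<lambda>x. t \<le> x) (dropWhile (\<lambda>x. x < t) ys) = dropWhile (\<lambda>x. x < t) ys"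
      using dw by (simp add: filter_id_conv)
    ultimately show ?thesis by simp
  qed
  have len: "length (filter (\<lambda>x. t \<le> x) ys) = length ys - m"
  proof -
    have "length (takeWhile (\<lambda>x. x < t) ys) + length (dropWhile (\<lambda>x. x < t) ys) = length ys"
      by (metis length_append takeWhile_dropWhile_id)
    then show ?thesis unfolding flt m_def by arith
  qed
  have "(t \<le> ys ! i) \<longleftrightarrow> m \<le> i"
  proof
    assume "t \<le> ys ! i"
    show "m \<le> i"
    proof (rule ccontr)
      assume "\<not> m \<le> i"
      then have "ys ! i = takeWhile (\<lambda>x. x < t) ys ! i"
        unfolding m_def by (simp add: takeWhile_nth)
      moreover have "takeWhile (\<lambda>x. x < t) ys ! i \<in> set (takeWhile (\<lambda>x. x < t) ys)"
        using \<open>\<not> m \<le> i\<close> m_def by auto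
      ultimately show False using tw \<open>t \<le> ys ! i\<close> by auto
    qed
  next
    assume mi: "m \<le> i"
    have "ys ! i = (takeWhile (\<lambda>x. x < t) ys @ dropWhile (\<lambda>x. x < t) ys) ! i" using split by simp
    also have "\<dots> = dropWhile (\<lambda>x. x < t) ys ! (i - m)"
      by (subst nth_append) (use mi in \<open>simp add: m_def\<close>)
    finally have eq: "ys ! i = dropWhile (\<lambda>x. x < t) ys ! (i - m)" .
    have "i - m < length (dropWhile (\<lambda>x. x < t) ys)"
      using assms(2) mi lenTD unfolding m_def by arith
    then have "dropWhile (\<lambda>x. x < t) ys ! (i - m) \<in> set (dropWhile (\<lambda>x. x < t) ys)" by (rule nth_mem)
    then show "t \<le> ys ! i" using dw eq by simp
  qed
  moreover have "m \<le> length ys" unfolding m_def by (rule length_takeWhile_le)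
  then have "length ys - i \<le> length ys - m \<longleftrightarrow> m \<le> i" using assms(2) by arith
  ultimately show ?thesis unfolding len by simp
qed

lemma length_filter_sort_eq: "length (filter P (sort xs)) = length (filter P xs)"
proof -
  have "mset (filter P (sort xs)) = mset (filter P xs)" by (simp add: mset_filter)
  have "length (filter P (sort xs)) = size (mset (filter P (sort xs)))" by (rule size_mset[symmetric])
  also have "\<dots> = size (mset (filter P xs))" using \<open>mset (filter P (sort xs)) = mset (filter P xs)\<close> by (rule arg_cong)
  also have "\<dots> = length (filter P xs)" by (rule size_mset)
  finally show ?thesis .
qed

lemma order_stat_ge_iff:
  assumes "1 \<le> k" "k \<le> n"
  shows "(t \<le> order_stat n k x) \<longleftrightarrow> k \<le> card {i\<in>{..<n}. t \<le> x i}"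
proof -
  let ?xs = "map x [0..<n]"
  have "order_stat n k x = sort ?xs ! (n - k)"
    unfolding order_stat_def using assms by (simp add: rev_nth)
  moreover have "(t \<le> sort ?xs ! (n - k)) \<longleftrightarrow> n - (n - k) \<le> length (filter (\<lambda>y. t \<le> y) (sort ?xs))"
    using sorted_nth_ge_iff[of "sort ?xs" "n-k" t] assms by simp
  moreover have "length (filter (\<lambda>y. t \<le> y) (sort ?xs)) = length (filter (\<lambda>y. t \<le> y) ?xs)"
    by (simp only: length_filter_sort_eq)
  moreover have "length (filter (\<lambda>y. t \<le> y) ?xs) = card {i\<in>{..<n}. t \<le> x i}"
    unfolding length_filter_conv_card length_map length_upt by (intro arg_cong[where f=card]) auto
  ultimately show ?thesis using assms by simp
qed

lemma ln_ineq:
  fixes x :: real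
  assumes "0 \<le> x" "x < 1"
  shows "- ln (1 - x) - x \<le> x\<^sup>2 / (2 * (1 - x))"
proof -
  define g where "g y = y + y\<^sup>2 / (2 * (1 - y)) + ln (1 - y)" for y :: real
  have d: "(g has_real_derivative (y\<^sup>2 / (2 * (1 - y)\<^sup>2))) (at y)" if "y < 1" for y
  proof -
    have "(g has_real_derivative (1 + ((2*y) * (2 * (1 - y)) - y\<^sup>2 * (2 * (-1))) / (2 * (1 - y))\<^sup>2 + (-1) / (1 - y))) (at y)"
      unfolding g_def using that
      by (auto intro!: derivative_eq_intros simp: power2_eq_square)
    moreover have "1 + ((2*y) * (2 * (1 - y)) - y\<^sup>2 * (2 * (-1))) / (2 * (1 - y))\<^sup>2 + (-1) / (1 - y) = y\<^sup>2 / (2 * (1 - y)\<^sup>2)"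
      using that apply (subgoal_tac "1 - y \<noteq> 0")
      apply (simp add: divide_simps power2_eq_square)
      apply (simp add: algebra_simps)
      apply simp
      done
    ultimately show ?thesis by simp
  qed
  have "g 0 \<le> g x"
  proof (rule DERIV_nonneg_imp_nondecreasing[of 0 x g])
    show "0 \<le> x" by fact
    fix y assume "0 \<le> y" "y \<le> x"
    then have "y < 1" using assms by simp
    show "\<exists>z. (g has_real_derivative z) (at y) \<and> 0 \<le> z"
      using d[OF \<open>y < 1\<close>] by (intro exI[of _ "y\<^sup>2 / (2 * (1 - y)\<^sup>2)"]) auto
  qed
  then show ?thesis unfolding g_def by simp
qed

lemma inv_sq_le: "N > (0::real) \<Longrightarrow> 1/(N+1)^2 \<le> 1/N - 1/(N+1)"
proof -
  assume N: "N > 0"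
  have "1/N - 1/(N+1) = 1/(N*(N+1))" using N by (simp add: field_simps)
  moreover have "1/(N+1)^2 \<le> 1/(N*(N+1))" using N
    by (intro divide_left_mono) (auto simp: power2_eq_square intro!: mult_pos_pos)
  ultimately show ?thesis by simp
qed

lemma sum_inv_sq:
  assumes "1 \<le> k"
  shows "(\<Sum>j\<le>m. 1 / (real k + real j)\<^sup>2) \<le> 2 / real k - 1 / (real k + real m)"
proof (induction m)
  case 0
  have "1 / (real k)\<^sup>2 \<le> 1 / real k" using assms by (simp add: power2_eq_square field_simps)
  then show ?case by simp
next
  case (Suc m)
  have a: "1 / (real k + real (Suc m))\<^sup>2 \<le> 1 / (real k + real m) - 1 / (real k + real (Suc m))"
    using inv_sq_le[of "real k + real m"] assms by (simp add: add_ac)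
  show ?case using Suc a by simp
qed

lemma Beta_nat2:
  fixes x :: real
  assumes "x > 0"
  shows "Beta x (real m + 1) = fact m / (\<Prod>j\<le>m. (x + real j))"
proof (induction m)
  case 0
  have "Beta x 1 = Gamma x / Gamma (x + 1)" unfolding Beta_def by simp
  also have "\<dots> = 1 / x"
  proof -
    have "Gamma x \<noteq> 0" using Gamma_real_pos[OF assms] by linarith
    moreover have "x \<notin> \<int>\<^sub>\<le>\<^sub>0" using assms by (auto elim!: nonpos_Ints_cases)
    ultimately show ?thesis using assms by (subst Gamma_plus1) (simp_all add: field_simps)
  qed
  finally show ?case by simp
next
  case (Suc m)
  have nz: "real m + 1 \<notin> \<int>\<^sub>\<le>\<^sub>0" by (auto elim!: nonpos_Ints_cases)
  have "(x + (real m + 1)) * Beta x (real m + 1 + 1) = (real m + 1) * Beta x (real m + 1)"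
    by (rule Beta_plus1_right[OF nz])
  then have "Beta x (real (Suc m) + 1) = (real m + 1) * Beta x (real m + 1) / (x + (real m + 1))"
    using assms by (simp add: field_simps)
  also have "\<dots> = (real m + 1) * (fact m / (\<Prod>j\<le>m. (x + real j))) / (x + (real m + 1))"
    using Suc by simp
  also have "\<dots> = fact (Suc m) / ((\<Prod>j\<le>m. (x + real j)) * (x + real (Suc m)))"
    by (simp add: field_simps)
  also have "(\<Prod>j\<le>m. (x + real j)) * (x + real (Suc m)) = (\<Prod>j\<le>Suc m. (x + real j))"
    by simp
  finally show ?case .
qed

lemma prod_consec:
  "(\<Prod>j\<le>m. (real k + 1 + real j)) * fact k = fact (k + m + 1)"
proof (induction m)
  case 0
  then show ?case by (simp add: algebra_simps)
next
  case (Suc m)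
  have "(\<Prod>j\<le>Suc m. (real k + 1 + real j)) * fact k =
     (real k + 1 + real (Suc m)) * ((\<Prod>j\<le>m. (real k + 1 + real j)) * fact k)"
    by (simp add: algebra_simps)
  also have "\<dots> = fact (k + Suc m + 1)" using Suc by (simp add: algebra_simps)
  finally show ?case .
qed

lemma beta_prod:
  fixes a :: real
  assumes "1 \<le> k" "k \<le> n" "real k + a > 0"
  shows "real n * real (n - 1 choose (k - 1)) * Beta (real k + a) (real (n - k) + 1)
       = (\<Prod>j\<le>n-k. (real k + real j) / (real k + real j + a))"
proof -
  define m where "m = n - k"
  define k' where "k' = k - 1"
  have kk: "k = k' + 1" "n = k' + m + 1" using assms unfolding m_def k'_def by auto
  have B: "Beta (real k + a) (real m + 1) = fact m / (\<Prod>j\<le>m. (real k + a + real j))"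
    by (rule Beta_nat2) (use assms in simp)
  have c: "fact k' * fact m * real (n - 1 choose k') = fact (n - 1)"
  proof -
    have "fact k' * fact m * (n - 1 choose k') = (fact (n - 1) :: nat)"
      using binomial_fact_lemma[of k' "n-1"] kk by simp
    then have "real (fact k' * fact m * (n - 1 choose k')) = real (fact (n - 1))" by simp
    then show ?thesis by simp
  qed
  have c2: "real n * fact (n - 1) = (fact n :: real)"
    using kk by (simp add: fact_reduce[of n])
  have "real n * real (n - 1 choose k') * fact m * fact k' = real n * (fact k' * fact m * real (n - 1 choose k'))"
    by (simp add: ac_simps)
  also have "\<dots> = real n * fact (n - 1)" using c by simp
  also have "\<dots> = fact n" using c2 .
  finally have "real n * real (n - 1 choose k') * fact m * fact k' = fact n" .
  also have "fact n = (fact (k' + m + 1) :: real)" using kk by simp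
  also have "\<dots> = (\<Prod>j\<le>m. (real k' + 1 + real j)) * fact k'"
    by (rule prod_consec[symmetric])
  also have "(\<Prod>j\<le>m. (real k' + 1 + real j)) = (\<Prod>j\<le>m. (real k + real j))"
    using kk by (simp add: add_ac)
  finally have e: "real n * real (n - 1 choose k') * fact m = (\<Prod>j\<le>m. (real k + real j))"
    by simp
  have "real n * real (n - 1 choose (k - 1)) * Beta (real k + a) (real (n - k) + 1)
      = (\<Prod>j\<le>m. (real k + real j)) / (\<Prod>j\<le>m. (real k + a + real j))"
    using B e unfolding m_def[symmetric] k'_def[symmetric] by (simp add: field_simps)
  also have "\<dots> = (\<Prod>j\<le>m. (real k + real j) / (real k + real j + a))"
    by (simp add: prod_dividef algebra_simps)
  finally show ?thesis unfolding m_def .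
qed

definition betaD :: "nat \<Rightarrow> nat \<Rightarrow> real \<Rightarrow> real" where
  "betaD n k q = real n * real (n - 1 choose (k - 1)) * q ^ (k - 1) * (1 - q) ^ (n - k)"

definition Bn :: "nat \<Rightarrow> nat \<Rightarrow> real \<Rightarrow> real" where
  "Bn n k q = (\<Sum>j\<in>{k..n}. real (n choose j) * q ^ j * (1 - q) ^ (n - j))"

lemma Bn_deriv_aux:
  assumes "n - k = d" "1 \<le> k" "k \<le> n"
  shows "(Bn n k has_real_derivative betaD n k q) (at q)"
  using assms
proof (induction d arbitrary: k)
  case 0
  then have kn: "k = n" by simp
  then obtain a where a: "n = Suc a" using 0 by (cases n) auto
  have "Bn n k = (\<lambda>q. q ^ n)" unfolding Bn_def kn by (simp add: fun_eq_iff)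
  moreover have "betaD n k q = real n * q ^ (n - 1)" unfolding betaD_def kn by simp
  moreover have "((\<lambda>q. q ^ n) has_real_derivative real n * q ^ (n - 1)) (at q)"
    by (rule derivative_eq_intros refl)+ simp
  ultimately show ?case by simp
next
  case (Suc d)
  then have kn: "k < n" by simp
  obtain a where a: "k = Suc a" using Suc.prems by (cases k) auto
  obtain b where b: "n - k = Suc b" using kn by (cases "n - k") auto
  have IH: "(Bn n (Suc k) has_real_derivative betaD n (Suc k) q) (at q)"
    using Suc.IH[of "Suc k"] Suc.prems by simp
  have split: "Bn n k = (\<lambda>q. real (n choose k) * q ^ k * (1 - q) ^ (n - k) + Bn n (Suc k) q)"
    unfolding Bn_def using kn by (simp add: fun_eq_iff sum.atLeast_Suc_atMost)
  have D: "((\<lambda>q. real (n choose k) * q ^ k * (1 - q) ^ (n - k)) has_real_derivative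
      real (n choose k) * (real k * q ^ a * (1 - q) ^ (Suc b) - real (Suc b) * q ^ k * (1 - q) ^ b)) (at q)"
    unfolding b by (rule derivative_eq_intros refl)+ (simp add: a algebra_simps)
  have c1: "real (n choose k) * real k = real n * real (n - 1 choose a)"
  proof -
    have "Suc a * (n choose Suc a) = n * ((n - 1) choose a)" by (rule binomial_absorption)
    then show ?thesis unfolding a by (metis of_nat_mult mult.commute)
  qed
  have c2: "real (n choose k) * real (Suc b) = real n * real (n - 1 choose k)"
  proof -
    have "(n - k) * (n choose k) = n * ((n - 1) choose k)" by (rule binomial_absorb_comp)
    then show ?thesis unfolding b by (metis of_nat_mult mult.commute)
  qed
  have bk: "betaD n k q = real n * real (n - 1 choose a) * q ^ a * (1 - q) ^ Suc b"
    unfolding betaD_def a using b a by simp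
  have bk1: "betaD n (Suc k) q = real n * real (n - 1 choose k) * q ^ k * (1 - q) ^ b"
  proof -
    have "n - Suc k = b" using b by arith
    then show ?thesis unfolding betaD_def by simp
  qed
  have "real (n choose k) * (real k * q ^ a * (1 - q) ^ (Suc b) - real (Suc b) * q ^ k * (1 - q) ^ b)
        + betaD n (Suc k) q = betaD n k q"
    unfolding bk bk1 c1[symmetric] c2[symmetric] by (simp add: algebra_simps)
  then show ?case unfolding split using DERIV_add[OF D IH] by simp
qed

lemma Bn_deriv:
  assumes "1 \<le> k" "k \<le> n"
  shows "(Bn n k has_real_derivative betaD n k q) (at q)"
  using Bn_deriv_aux[OF refl assms] .

lemma Bn_0: "1 \<le> k \<Longrightarrow> Bn n k 0 = 0"
  unfolding Bn_def by (intro sum.neutral) auto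

lemma Bn_1: "k \<le> n \<Longrightarrow> Bn n k 1 = 1"
proof -
  assume "k \<le> n"
  have "Bn n k 1 = (\<Sum>j\<in>{k..n}. if j = n then 1 else 0)"
    unfolding Bn_def by (intro sum.cong) auto
  also have "\<dots> = 1" using \<open>k \<le> n\<close> by simp
  finally show ?thesis .
qed

lemma betaD_nonneg: "0 \<le> q \<Longrightarrow> q \<le> 1 \<Longrightarrow> 0 \<le> betaD n k q"
  unfolding betaD_def by simp

lemma betaD_has_integral:
  assumes "1 \<le> k" "k \<le> n" "0 \<le> q"
  shows "(betaD n k has_integral Bn n k q) {0..q}"
proof -
  have "(betaD n k has_integral (Bn n k q - Bn n k 0)) {0..q}"
    by (rule fundamental_theorem_of_calculus[OF assms(3)])
       (auto simp: has_real_derivative_iff_has_vector_derivative[symmetric]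
             intro!: DERIV_subset[OF Bn_deriv[OF assms(1,2)]])
  then show ?thesis using Bn_0[OF assms(1)] by simp
qed

lemma betaD_measurable[measurable]: "betaD n k \<in> borel_measurable borel"
  unfolding betaD_def by measurable

definition betaM :: "nat \<Rightarrow> nat \<Rightarrow> real measure" where
  "betaM n k = density lborel (\<lambda>q. ennreal (indicator {0..1} q * betaD n k q))"

lemma betaM_Iic:
  assumes "1 \<le> k" "k \<le> n"
  shows "emeasure (betaM n k) {..q} = ennreal (Bn n k (max 0 (min q 1)))"
proof -
  define q' where "q' = max 0 (min q 1)"
  have "emeasure (betaM n k) {..q} = (\<integral>\<^sup>+x. ennreal (indicator {0..1} x * betaD n k x) * indicator {..q} x \<partial>lborel)"
    unfolding betaM_def by (subst emeasure_density) auto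
  also have "\<dots> = (\<integral>\<^sup>+x. ennreal (betaD n k x) * indicator {0..q'} x \<partial>lborel)"
    by (intro nn_integral_cong_AE, rule AE_mp[OF AE_lborel_singleton[of 0]]) (auto simp: indicator_def q'_def)
  also have "\<dots> = ennreal (Bn n k q')"
    by (rule nn_integral_has_integral_lebesgue')
       (auto simp: q'_def intro!: betaD_nonneg betaD_has_integral assms)
  finally show ?thesis unfolding q'_def .
qed

lemma prob_space_betaM:
  assumes "1 \<le> k" "k \<le> n"
  shows "prob_space (betaM n k)"
proof
  have "space (betaM n k) = UNIV" unfolding betaM_def by simp
  moreover have "emeasure (betaM n k) UNIV = emeasure (betaM n k) {..1}"
    unfolding betaM_def by (subst (1 2) emeasure_density) (auto intro!: nn_integral_cong simp: indicator_def)
  ultimately show "emeasure (betaM n k) (space (betaM n k)) = 1"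
    using betaM_Iic[OF assms, of 1] Bn_1[OF assms(2)] by simp
qed

lemma real_distribution_betaM:
  assumes "1 \<le> k" "k \<le> n"
  shows "real_distribution (betaM n k)"
  unfolding real_distribution_def real_distribution_axioms_def
  using prob_space_betaM[OF assms] by (simp add: betaM_def)

locale ihr =
  fixes M :: "'a measure" and X :: "nat \<Rightarrow> 'a \<Rightarrow> real" and f :: "real \<Rightarrow> real" and L :: real
    and n k :: nat
  assumes prob: "prob_space M"
    and n2: "n \<ge> 2" and k1: "1 \<le> k" and kn: "k \<le> n - 1"
    and indep: "prob_space.indep_vars M (\<lambda>_. borel) X {..<n}"
    and dens: "\<And>i. i < n \<Longrightarrow> distributed M lborel (X i) (\<lambda>t. ennreal (f t))"
    and f_nonneg: "\<And>t. f t \<ge> 0"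
    and support_lo: "\<And>t. t < 0 \<Longrightarrow> f t = 0"
    and support_hi: "\<And>t. t \<ge> 0 \<Longrightarrow> measure M {\<omega> \<in> space M. X 0 \<omega> \<le> t} < 1"
    and IHR: "\<And>x1 x2. 0 \<le> x2 \<Longrightarrow> x2 \<le> x1 \<Longrightarrow>
        hazard f (\<lambda>t. measure M {\<omega> \<in> space M. X 0 \<omega> \<le> t}) x2
          \<le> hazard f (\<lambda>t. measure M {\<omega> \<in> space M. X 0 \<omega> \<le> t}) x1"
    and L_def: "L = (INF x\<in>{0..}. hazard f (\<lambda>t. measure M {\<omega> \<in> space M. X 0 \<omega> \<le> t}) x)"
    and L_pos: "L > 0"
begin

sublocale prob_space M by (rule prob)

definition F :: "real \<Rightarrow> real" where "F t = measure M {\<omega> \<in> space M. X 0 \<omega> \<le> t}"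
definition G :: "real \<Rightarrow> real" where "G t = 1 - F t"
definition h :: "real \<Rightarrow> real" where "h = hazard f F"

lemma F_lam: "(\<lambda>t. measure M {\<omega> \<in> space M. X 0 \<omega> \<le> t}) = F"
  by (simp add: F_def fun_eq_iff)

lemma h_mono: "0 \<le> a \<Longrightarrow> a \<le> b \<Longrightarrow> h a \<le> h b"
  using IHR[of a b] unfolding F_lam h_def by simp

lemma L_le_h: assumes "0 \<le> a" shows "L \<le> h a"
proof -
  have "bdd_below (h ` {0..})" using h_mono by (intro bdd_belowI[of _ "h 0"]) auto
  then show ?thesis unfolding L_def F_lam h_def[symmetric] using assms by (intro cINF_lower) auto
qed

lemma n_pos: "0 < n" using n2 by simp
lemma k_le_n: "k \<le> n" using kn by simp

lemma Xmeas[measurable]: "i < n \<Longrightarrow> X i \<in> borel_measurable M"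
  using dens[of i] by (auto dest: distributed_measurable)

lemma f_meas[measurable]: "f \<in> borel_measurable borel"
proof -
  have "f \<in> borel_measurable lborel"
    by (rule distributed_real_measurable[OF _ dens[OF n_pos]]) (simp add: f_nonneg)
  then show ?thesis by simp
qed

lemma Xemeasure:
  assumes "i < n" "A \<in> sets borel"
  shows "emeasure M {\<omega> \<in> space M. X i \<omega> \<in> A} = (\<integral>\<^sup>+x. ennreal (f x) * indicator A x \<partial>lborel)"
proof -
  have "{\<omega> \<in> space M. X i \<omega> \<in> A} = X i -` A \<inter> space M" by auto
  then show ?thesis using distributed_emeasure[OF dens[OF assms(1)], of A] assms(2) by simp
qed

lemma Xprob_eq:
  assumes "i < n" "A \<in> sets borel"
  shows "prob {\<omega> \<in> space M. X i \<omega> \<in> A} = prob {\<omega> \<in> space M. X 0 \<omega> \<in> A}"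
  using Xemeasure[OF assms] Xemeasure[OF n_pos assms(2)]
  by (simp add: measure_def)

lemma F_i: "i < n \<Longrightarrow> prob {\<omega> \<in> space M. X i \<omega> \<le> t} = F t"
  using Xprob_eq[of i "{..t}"] unfolding F_def by simp

lemma single_null: "i < n \<Longrightarrow> prob {\<omega> \<in> space M. X i \<omega> = t} = 0"
proof -
  assume i: "i < n"
  have "emeasure M {\<omega> \<in> space M. X i \<omega> \<in> {t}} = (\<integral>\<^sup>+x. ennreal (f x) * indicator {t} x \<partial>lborel)"
    using Xemeasure[OF i, of "{t}"] by simp
  also have "\<dots> = 0"
    by (rule nn_integral_0_iff_AE[THEN iffD2], measurable)
       (rule AE_mp[OF AE_lborel_singleton[of t]], auto)
  finally show ?thesis by (simp add: measure_def)
qed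

lemma G_i: assumes "i < n" shows "prob {\<omega> \<in> space M. t \<le> X i \<omega>} = G t"
proof -
  note [measurable] = Xmeas[OF assms]
  have "prob {\<omega> \<in> space M. t \<le> X i \<omega>} = 1 - prob {\<omega> \<in> space M. X i \<omega> < t}"
  proof -
    have "{\<omega> \<in> space M. t \<le> X i \<omega>} = space M - {\<omega> \<in> space M. X i \<omega> < t}" by auto
    then show ?thesis using assms by (simp add: prob_compl)
  qed
  moreover have "prob {\<omega> \<in> space M. X i \<omega> \<le> t} = prob {\<omega> \<in> space M. X i \<omega> < t} + prob {\<omega> \<in> space M. X i \<omega> = t}"
  proof -
    have "{\<omega> \<in> space M. X i \<omega> \<le> t} = {\<omega> \<in> space M. X i \<omega> < t} \<union> {\<omega> \<in> space M. X i \<omega> = t}" by auto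
    then show ?thesis by (simp only:) (subst finite_measure_Union, auto)
  qed
  ultimately show ?thesis using single_null[OF assms] F_i[OF assms] unfolding G_def by simp
qed

lemma G_gt_i: assumes "i < n" shows "prob {\<omega> \<in> space M. t < X i \<omega>} = G t"
proof -
  have "{\<omega> \<in> space M. t < X i \<omega>} = space M - {\<omega> \<in> space M. X i \<omega> \<le> t}" by auto
  then show ?thesis using assms F_i[OF assms] by (simp add: prob_compl G_def)
qed

lemma F_mono: "a \<le> b \<Longrightarrow> F a \<le> F b"
  unfolding F_def using n_pos by (intro finite_measure_mono) auto

lemma G_antimono: "a \<le> b \<Longrightarrow> G b \<le> G a"
  using F_mono unfolding G_def by simp

lemma F_nonneg: "0 \<le> F t" unfolding F_def by simp

lemma G_le1: "G t \<le> 1" using F_nonneg unfolding G_def by simp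

lemma G_pos: "0 < G t"
proof (cases "t \<ge> 0")
  case True then show ?thesis using support_hi[OF True] unfolding G_def F_def by simp
next
  case False
  then have "G 0 \<le> G t" by (intro G_antimono) simp
  moreover have "0 < G 0" using support_hi[of 0] unfolding G_def F_def by simp
  ultimately show ?thesis by simp
qed

lemma F_nonpos: assumes "t \<le> 0" shows "F t = 0"
proof -
  have "emeasure M {\<omega> \<in> space M. X 0 \<omega> \<in> {..t}} = (\<integral>\<^sup>+x. ennreal (f x) * indicator {..t} x \<partial>lborel)"
    using Xemeasure[OF n_pos, of "{..t}"] by simp
  also have "\<dots> = 0"
    by (rule nn_integral_0_iff_AE[THEN iffD2], measurable)
       (rule AE_mp[OF AE_lborel_singleton[of 0]], use assms support_lo in \<open>auto simp: indicator_def\<close>)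
  finally show ?thesis unfolding F_def by (simp add: measure_def)
qed

lemma G_nonpos: "t \<le> 0 \<Longrightarrow> G t = 1"
  using F_nonpos unfolding G_def by simp

lemma f_eq: assumes "0 \<le> s" shows "f s = h s * G s"
  using G_pos[of s] unfolding h_def hazard_def G_def by simp

lemma G_diff:
  assumes "a \<le> b"
  shows "ennreal (G a - G b) = (\<integral>\<^sup>+x. ennreal (f x) * indicator {a<..b} x \<partial>lborel)"
proof -
  have "G a - G b = prob {\<omega> \<in> space M. X 0 \<omega> \<le> b} - prob {\<omega> \<in> space M. X 0 \<omega> \<le> a}"
    unfolding G_def F_def by simp
  also have "\<dots> = prob {\<omega> \<in> space M. X 0 \<omega> \<in> {a<..b}}"
  proof -
    have "{\<omega> \<in> space M. X 0 \<omega> \<le> b} = {\<omega> \<in> space M. X 0 \<omega> \<le> a} \<union> {\<omega> \<in> space M. X 0 \<omega> \<in> {a<..b}}"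
      using assms by auto
    then have "prob {\<omega> \<in> space M. X 0 \<omega> \<le> b} = prob {\<omega> \<in> space M. X 0 \<omega> \<le> a} + prob {\<omega> \<in> space M. X 0 \<omega> \<in> {a<..b}}"
      using n_pos by (subst finite_measure_Union[symmetric]) auto
    then show ?thesis by simp
  qed
  finally have "ennreal (G a - G b) = emeasure M {\<omega> \<in> space M. X 0 \<omega> \<in> {a<..b}}"
    using n_pos by (simp add: emeasure_eq_measure)
  then show ?thesis using Xemeasure[OF n_pos, of "{a<..b}"] by simp
qed

lemma G_step:
  assumes "0 \<le> a" "a \<le> b"
  shows "G b * (1 + L * (b - a)) \<le> G a"
proof -
  have "ennreal (L * G b * (b - a)) = (\<integral>\<^sup>+x. ennreal (L * G b) * indicator {a<..b} x \<partial>lborel)"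
    using assms L_pos G_pos[of b] by (simp add: nn_integral_cmult_indicator ennreal_mult)
  also have "\<dots> \<le> (\<integral>\<^sup>+x. ennreal (f x) * indicator {a<..b} x \<partial>lborel)"
  proof (intro nn_integral_mono)
    fix x
    show "ennreal (L * G b) * indicator {a<..b} x \<le> ennreal (f x) * indicator {a<..b} x"
    proof (cases "x \<in> {a<..b}")
      case True
      then have "L * G b \<le> h x * G x"
        using assms L_le_h[of x] G_antimono[of x b] G_pos[of b] L_pos
        by (intro mult_mono) auto
      then show ?thesis using True f_eq[of x] assms by (simp add: ennreal_leI)
    qed simp
  qed
  also have "\<dots> = ennreal (G a - G b)" using G_diff[OF assms(2)] by simp
  finally have "L * G b * (b - a) \<le> G a - G b"
    using G_antimono[OF assms(2)] by (subst (asm) ennreal_le_iff) auto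
  then show ?thesis by (simp add: algebra_simps)
qed

lemma G_lip:
  assumes "0 \<le> a" "a \<le> b"
  shows "G a - G b \<le> h b * (b - a)"
proof -
  have hb: "0 \<le> h b" using L_le_h[of b] L_pos assms by simp
  have "ennreal (G a - G b) = (\<integral>\<^sup>+x. ennreal (f x) * indicator {a<..b} x \<partial>lborel)"
    using G_diff[OF assms(2)] .
  also have "\<dots> \<le> (\<integral>\<^sup>+x. ennreal (h b) * indicator {a<..b} x \<partial>lborel)"
  proof (intro nn_integral_mono)
    fix x
    show "ennreal (f x) * indicator {a<..b} x \<le> ennreal (h b) * indicator {a<..b} x"
    proof (cases "x \<in> {a<..b}")
      case True
      then have "h x * G x \<le> h b * 1"
        using assms h_mono[of x b] G_le1[of x] G_pos[of x] hb L_le_h[of x] L_pos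
        by (intro mult_mono) auto
      then show ?thesis using True f_eq[of x] assms by (simp add: ennreal_leI)
    qed simp
  qed
  also have "\<dots> = ennreal (h b * (b - a))"
    using assms hb by (simp add: nn_integral_cmult_indicator ennreal_mult)
  finally show ?thesis using hb assms by (subst (asm) ennreal_le_iff) auto
qed

end

context ihr
begin

lemma G_iter:
  assumes "0 \<le> a" "0 \<le> d"
  shows "G (a + real j * d) * (1 + L * d) ^ j \<le> G a"
proof (induction j)
  case 0 then show ?case by simp
next
  case (Suc j)
  have s: "G (a + real (Suc j) * d) * (1 + L * d) \<le> G (a + real j * d)"
    using G_step[of "a + real j * d" "a + real (Suc j) * d"] assms
    by (simp add: algebra_simps)
  have pos: "0 \<le> (1 + L * d) ^ j" using assms L_pos by simp
  have "G (a + real (Suc j) * d) * (1 + L * d) ^ Suc j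
        = (G (a + real (Suc j) * d) * (1 + L * d)) * (1 + L * d) ^ j" by (simp add: algebra_simps)
  also have "\<dots> \<le> G (a + real j * d) * (1 + L * d) ^ j" using s pos by (rule mult_right_mono)
  also have "\<dots> \<le> G a" using Suc .
  finally show ?case .
qed

lemma G_exp:
  assumes "0 \<le> a" "a \<le> b"
  shows "G b * exp (L * (b - a)) \<le> G a"
proof -
  define x where "x = L * (b - a)"
  have le: "G b * (1 + x / real N) ^ N \<le> G a" if N: "N \<ge> 1" for N :: nat
  proof -
    define d where "d = (b - a) / real N"
    have "a + real N * d = b" using N unfolding d_def by simp
    moreover have "L * d = x / real N" unfolding d_def x_def by simp
    moreover have "0 \<le> d" using assms unfolding d_def by simp
    ultimately show ?thesis using G_iter[of a d N] assms by simp
  qed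
  have "(\<lambda>N. G b * (1 + x / real N) ^ N) \<longlonglongrightarrow> G b * exp x"
    by (intro tendsto_mult tendsto_const tendsto_exp_limit_sequentially)
  then show ?thesis unfolding x_def[symmetric]
    by (rule LIMSEQ_le_const2) (use le in auto)
qed

lemma G_exp0: assumes "0 \<le> b" shows "G b \<le> exp (- L * b)"
proof -
  have "G b * exp (L * b) \<le> 1" using G_exp[of 0 b] assms G_nonpos[of 0] by simp
  then show ?thesis by (simp add: exp_minus field_simps)
qed

lemma G_cont: "continuous_on {0..B} G"
proof (rule lipschitz_on_continuous_on)
  show "(max 0 (h B))-lipschitz_on {0..B} G"
  proof (rule lipschitz_onI)
    fix x y assume xy: "x \<in> {0..B}" "y \<in> {0..B}"
    have hB: "\<And>z. z \<in> {0..B} \<Longrightarrow> h z \<le> max 0 (h B)" using h_mono by fastforce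
    show "dist (G x) (G y) \<le> max 0 (h B) * dist x y"
    proof (cases "x \<le> y")
      case True
      then have "G x - G y \<le> h y * (y - x)" using xy G_lip[of x y] by auto
      also have "\<dots> \<le> max 0 (h B) * (y - x)" using hB[OF xy(2)] True by (intro mult_right_mono) auto
      finally show ?thesis using G_antimono[OF True] True by (simp add: dist_real_def)
    next
      case False
      then have "G y - G x \<le> h x * (x - y)" using xy G_lip[of y x] by auto
      also have "\<dots> \<le> max 0 (h B) * (x - y)" using hB[OF xy(1)] False by (intro mult_right_mono) auto
      finally show ?thesis using G_antimono[of y x] False by (simp add: dist_real_def)
    qed
  qed simp
qed

lemma G_strict: assumes "0 \<le> a" "a < b" shows "G b < G a"
proof -
  have "G b * (1 + L * (b - a)) \<le> G a" using G_step assms by simp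
  moreover have "G b < G b * (1 + L * (b - a))" using G_pos[of b] L_pos assms by (simp add: algebra_simps)
  ultimately show ?thesis by simp
qed

lemma G_inv:
  assumes "0 < q" "q < 1"
  shows "\<exists>t>0. G t = q"
proof -
  define B where "B = - ln q / L"
  have "ln q \<le> 0" using assms by simp
  then have B0: "0 \<le> B" using L_pos unfolding B_def by (simp add: divide_nonpos_pos)
  have "G B \<le> exp (- L * B)" using G_exp0[OF B0] .
  also have "exp (- L * B) = q" using assms L_pos unfolding B_def by simp
  finally have "G B \<le> q" .
  moreover have "q \<le> G 0" using G_nonpos[of 0] assms by simp
  ultimately obtain t where t: "0 \<le> t" "t \<le> B" "G t = q"
    using IVT2'[of G B q 0, OF _ _ B0 G_cont] by auto
  moreover have "t \<noteq> 0" using t assms G_nonpos[of 0] by auto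
  ultimately show ?thesis by (intro exI[of _ t]) auto
qed

lemma G_le_iff:
  assumes "0 < t" "G t = q" "q < 1"
  shows "G y \<le> q \<longleftrightarrow> t \<le> y"
proof
  assume "G y \<le> q"
  show "t \<le> y"
  proof (rule ccontr)
    assume "\<not> t \<le> y"
    then have "y < t" by simp
    show False
    proof (cases "0 \<le> y")
      case True then show ?thesis using G_strict[OF True \<open>y < t\<close>] assms \<open>G y \<le> q\<close> by simp
    next
      case False then show ?thesis using G_nonpos[of y] assms \<open>G y \<le> q\<close> by simp
    qed
  qed
next
  assume "t \<le> y"
  then show "G y \<le> q" using G_antimono assms by auto
qed

lemma G_meas[measurable]: "G \<in> borel_measurable borel"
proof -
  have "mono F" using F_mono by (auto simp: mono_def)
  then have "F \<in> borel_measurable borel" by (rule borel_measurable_mono)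
  then show ?thesis unfolding G_def[abs_def] by measurable
qed

end

context ihr
begin

definition Z :: "real \<Rightarrow> nat \<Rightarrow> 'a \<Rightarrow> real" where
  "Z t i \<omega> = (if t \<le> X i \<omega> then 1 else 0)"

lemma Z_meas[measurable]: "i < n \<Longrightarrow> Z t i \<in> borel_measurable M"
  unfolding Z_def by (simp add: Xmeas)

lemma Z_indep: "indep_vars (\<lambda>_. borel) (Z t) {..<n}"
proof -
  have "indep_vars (\<lambda>_. borel) (\<lambda>i \<omega>. (\<lambda>x. if t \<le> x then 1 else 0 :: real) (X i \<omega>)) {..<n}"
    by (rule indep_vars_compose2[OF indep]) measurable
  then show ?thesis unfolding Z_def[abs_def] .
qed

lemma Z_sum_meas[measurable]: "J \<subseteq> {..<n} \<Longrightarrow> (\<lambda>\<omega>. \<Sum>i\<in>J. Z t i \<omega>) \<in> borel_measurable M"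
  by (rule borel_measurable_sum) (auto intro: Z_meas)

lemma pascal_step: "(p::real) * (A * p ^ j' * (1 - p) ^ (Suc r)) + (1 - p) * (B * p ^ (Suc j') * (1 - p) ^ r)
   = (A + B) * p ^ (Suc j') * (1 - p) ^ (Suc r)"
  by (simp add: algebra_simps)

lemma count_prob:
  assumes "finite J" "J \<subseteq> {..<n}"
  shows "prob {\<omega> \<in> space M. (\<Sum>i\<in>J. Z t i \<omega>) = real j}
       = real (card J choose j) * G t ^ j * (1 - G t) ^ (card J - j)"
  using assms
proof (induction J arbitrary: j rule: finite_induct)
  case empty
  show ?case by (cases j) (auto simp: prob_space)
next
  case (insert i J)
  let ?p = "G t"
  let ?S = "\<lambda>\<omega>. \<Sum>i\<in>J. Z t i \<omega>"
  have i: "i < n" and J: "J \<subseteq> {..<n}" using insert.prems by auto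
  note [measurable] = Z_meas[OF i] Z_sum_meas[OF J]
  have ind: "indep_var borel (Z t i) borel ?S"
    by (rule indep_vars_sum[OF insert.hyps(1,2)])
       (rule indep_vars_subset[OF Z_indep], use insert.prems in auto)
  have pZ1: "prob {\<omega> \<in> space M. Z t i \<omega> = 1} = ?p"
  proof -
    have "{\<omega> \<in> space M. Z t i \<omega> = 1} = {\<omega> \<in> space M. t \<le> X i \<omega>}" by (auto simp: Z_def)
    then show ?thesis using G_i[OF i, of t] by simp
  qed
  have pZ0: "prob {\<omega> \<in> space M. Z t i \<omega> = 0} = 1 - ?p"
  proof -
    have "{\<omega> \<in> space M. Z t i \<omega> = 0} = space M - {\<omega> \<in> space M. Z t i \<omega> = 1}"
      by (auto simp: Z_def)
    then show ?thesis using pZ1 by (simp add: prob_compl)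
  qed
  have joint: "prob {\<omega> \<in> space M. Z t i \<omega> = a \<and> ?S \<omega> = b} =
      prob {\<omega> \<in> space M. Z t i \<omega> = a} * prob {\<omega> \<in> space M. ?S \<omega> = b}" for a b
  proof -
    have "prob ((\<lambda>x. (Z t i x, ?S x)) -` ({a} \<times> {b}) \<inter> space M) =
        prob (Z t i -` {a} \<inter> space M) * prob (?S -` {b} \<inter> space M)"
      by (rule indep_varD[OF ind]) auto
    moreover have "(\<lambda>x. (Z t i x, ?S x)) -` ({a} \<times> {b}) \<inter> space M = {\<omega> \<in> space M. Z t i \<omega> = a \<and> ?S \<omega> = b}"
      by auto
    moreover have "Z t i -` {a} \<inter> space M = {\<omega> \<in> space M. Z t i \<omega> = a}" by auto
    moreover have "?S -` {b} \<inter> space M = {\<omega> \<in> space M. ?S \<omega> = b}" by auto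
    ultimately show ?thesis by simp
  qed
  have sum_ins: "(\<Sum>i\<in>insert i J. Z t i \<omega>) = Z t i \<omega> + ?S \<omega>" for \<omega>
    using insert.hyps by simp
  have Z01: "Z t i \<omega> = 0 \<or> Z t i \<omega> = 1" for \<omega> unfolding Z_def by auto
  have cardins: "card (insert i J) = Suc (card J)" using insert.hyps by simp
  show ?case
  proof (cases j)
    case 0
    have "{\<omega> \<in> space M. (\<Sum>i\<in>insert i J. Z t i \<omega>) = real j} =
      {\<omega> \<in> space M. Z t i \<omega> = 0 \<and> ?S \<omega> = real 0}"
    proof -
      have a: "?S \<omega> \<ge> 0" for \<omega> by (intro sum_nonneg) (auto simp: Z_def)
      have b: "Z t i \<omega> \<ge> 0" for \<omega> by (auto simp: Z_def)
      show ?thesis using 0 unfolding sum_ins using add_nonneg_eq_0_iff[OF b a] by auto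
    qed
    then have "prob {\<omega> \<in> space M. (\<Sum>i\<in>insert i J. Z t i \<omega>) = real j} = (1 - ?p) * ((1 - ?p) ^ card J)"
      using joint[of 0 "real 0"] pZ0 insert.IH[OF J, of 0] by simp
    then show ?thesis using 0 cardins by simp
  next
    case (Suc j')
    have eq: "{\<omega> \<in> space M. (\<Sum>i\<in>insert i J. Z t i \<omega>) = real j} =
      {\<omega> \<in> space M. Z t i \<omega> = 1 \<and> ?S \<omega> = real j'} \<union> {\<omega> \<in> space M. Z t i \<omega> = 0 \<and> ?S \<omega> = real j}"
    proof -
      have pt: "(a + s = real (Suc j')) \<longleftrightarrow> (a = 1 \<and> s = real j') \<or> (a = 0 \<and> s = real (Suc j'))"
        if "a = 0 \<or> a = 1" for a s :: real
        using that by auto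
      show ?thesis unfolding Suc sum_ins using pt[OF Z01] by blast
    qed
    have "prob {\<omega> \<in> space M. (\<Sum>i\<in>insert i J. Z t i \<omega>) = real j} =
      prob {\<omega> \<in> space M. Z t i \<omega> = 1 \<and> ?S \<omega> = real j'} + prob {\<omega> \<in> space M. Z t i \<omega> = 0 \<and> ?S \<omega> = real j}"
      unfolding eq by (subst finite_measure_Union) auto
    also have "\<dots> = ?p * (real (card J choose j') * ?p ^ j' * (1 - ?p) ^ (card J - j'))
       + (1 - ?p) * (real (card J choose j) * ?p ^ j * (1 - ?p) ^ (card J - j))"
      using joint pZ0 pZ1 insert.IH[OF J] by simp
    also have "\<dots> = real (card (insert i J) choose j) * ?p ^ j * (1 - ?p) ^ (card (insert i J) - j)"
    proof -
      consider "j' < card J" | "card J \<le> j'" by arith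
      then show ?thesis
      proof cases
        case 1
        then obtain r where r: "card J - j' = Suc r" by (cases "card J - j'") auto
        then have r2: "card J - Suc j' = r" by simp
        have r3: "Suc (card J) - Suc j' = Suc r" using r by simp
        have hc: "real (Suc (card J) choose Suc j') = real (card J choose j') + real (card J choose Suc j')"
          by (simp only: binomial_Suc_Suc of_nat_add)
        show ?thesis unfolding cardins Suc r r2 r3 hc
          using pascal_step[of "?p" "real (card J choose j')" j' r "real (card J choose Suc j')"] by simp
      next
        case 2
        then have c0: "card J choose Suc j' = 0" by simp
        have e: "card J - j' = 0" using 2 by simp
        have e2: "Suc (card J) - Suc j' = 0" using 2 by simp
        have "real (Suc (card J) choose Suc j') = real (card J choose j')" using c0 by simp
        then show ?thesis unfolding cardins Suc e e2 c0 by simp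
      qed
    qed
    finally show ?thesis .
  qed
qed

lemma card_sum: "real (card {i \<in> {..<n}. t \<le> X i \<omega>}) = (\<Sum>i\<in>{..<n}. Z t i \<omega>)"
proof -
  have "{i \<in> {..<n}. t \<le> X i \<omega>} = {..<n} \<inter> {i. t \<le> X i \<omega>}" by auto
  then show ?thesis unfolding Z_def by (simp add: sum.If_cases)
qed

lemma Y_ge_prob:
  "prob {\<omega> \<in> space M. t \<le> order_stat n k (\<lambda>i. X i \<omega>)} = Bn n k (G t)"
proof -
  let ?S = "\<lambda>\<omega>. \<Sum>i\<in>{..<n}. Z t i \<omega>"
  note [measurable] = Z_sum_meas[of "{..<n}", OF order.refl]
  have "{\<omega> \<in> space M. t \<le> order_stat n k (\<lambda>i. X i \<omega>)} = (\<Union>j\<in>{k..n}. {\<omega> \<in> space M. ?S \<omega> = real j})"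
  proof -
    have pt: "t \<le> order_stat n k (\<lambda>i. X i \<omega>) \<longleftrightarrow> (\<exists>j\<in>{k..n}. ?S \<omega> = real j)" for \<omega>
    proof -
      have c: "card {i \<in> {..<n}. t \<le> X i \<omega>} \<le> n"
        by (rule order.trans[OF card_mono[of "{..<n}"]]) auto
      have "t \<le> order_stat n k (\<lambda>i. X i \<omega>) \<longleftrightarrow> k \<le> card {i \<in> {..<n}. t \<le> X i \<omega>}"
        by (rule order_stat_ge_iff[OF k1 k_le_n])
      also have "\<dots> \<longleftrightarrow> (\<exists>j\<in>{k..n}. real (card {i \<in> {..<n}. t \<le> X i \<omega>}) = real j)"
        using c by auto
      finally show ?thesis unfolding card_sum .
    qed
    show ?thesis using pt by blast
  qed
  then have "prob {\<omega> \<in> space M. t \<le> order_stat n k (\<lambda>i. X i \<omega>)} = (\<Sum>j\<in>{k..n}. prob {\<omega> \<in> space M. ?S \<omega> = real j})"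
    by (simp only:) (rule finite_measure_finite_Union, auto simp: disjoint_family_on_def)
  also have "\<dots> = Bn n k (G t)"
    unfolding Bn_def by (intro sum.cong refl) (subst count_prob, simp_all)
  finally show ?thesis .
qed

end

context ihr
begin

definition Y :: "'a \<Rightarrow> real" where "Y \<omega> = order_stat n k (\<lambda>i. X i \<omega>)"
definition Q :: "'a \<Rightarrow> real" where "Q \<omega> = G (Y \<omega>)"

lemma Y_meas[measurable]: "Y \<in> borel_measurable M"
proof (subst borel_measurable_iff_ge, intro allI)
  fix t
  note [measurable] = Z_sum_meas[of "{..<n}" t, OF order.refl]
  have "{\<omega> \<in> space M. t \<le> Y \<omega>} = {\<omega> \<in> space M. real k \<le> (\<Sum>i\<in>{..<n}. Z t i \<omega>)}"
    unfolding Y_def using order_stat_ge_iff[OF k1 k_le_n] card_sum[symmetric] by auto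
  also have "\<dots> \<in> sets M" by measurable
  finally show "{\<omega> \<in> space M. t \<le> Y \<omega>} \<in> sets M" .
qed

lemma Q_meas[measurable]: "Q \<in> borel_measurable M"
  unfolding Q_def[abs_def] by measurable

lemma Q_pos: "0 < Q \<omega>" unfolding Q_def by (rule G_pos)
lemma Q_le1: "Q \<omega> \<le> 1" unfolding Q_def by (rule G_le1)

lemma Y_ge_prob': "prob {\<omega> \<in> space M. t \<le> Y \<omega>} = Bn n k (G t)"
  unfolding Y_def by (rule Y_ge_prob)

lemma Q_cdf: "prob {\<omega> \<in> space M. Q \<omega> \<le> q} = Bn n k (max 0 (min q 1))"
proof -
  consider "q \<le> 0" | "1 \<le> q" | "0 < q" "q < 1" by linarith
  then show ?thesis
  proof cases
    case 1
    have "q < Q \<omega>" for \<omega> using Q_pos[of \<omega>] 1 by linarith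
    then have e: "{\<omega> \<in> space M. Q \<omega> \<le> q} = {}" by (auto simp: not_le)
    have "max 0 (min q 1) = 0" using 1 by simp
    then show ?thesis unfolding e using Bn_0[OF k1] by simp
  next
    case 2
    then have "{\<omega> \<in> space M. Q \<omega> \<le> q} = space M" using Q_le1 by (auto intro: order.trans)
    then show ?thesis using 2 Bn_1[OF k_le_n] by (simp add: prob_space)
  next
    case 3
    obtain t where t: "0 < t" "G t = q" using G_inv[OF 3] by auto
    have "{\<omega> \<in> space M. Q \<omega> \<le> q} = {\<omega> \<in> space M. t \<le> Y \<omega>}"
      unfolding Q_def using G_le_iff[OF t 3(2)] by auto
    then show ?thesis using Y_ge_prob'[of t] t 3 by simp
  qed
qed

lemma Q_distr: "distr M borel Q = betaM n k"
proof (rule cdf_unique)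
  show "real_distribution (distr M borel Q)" by (rule real_distribution_distr) simp
  show "real_distribution (betaM n k)" by (rule real_distribution_betaM[OF k1 k_le_n])
  show "cdf (distr M borel Q) = cdf (betaM n k)"
  proof
    fix q
    have "cdf (distr M borel Q) q = prob {\<omega> \<in> space M. Q \<omega> \<le> q}"
      unfolding cdf_def by (subst measure_distr) (auto intro!: arg_cong[where f=prob])
    also have "\<dots> = Bn n k (max 0 (min q 1))" by (rule Q_cdf)
    also have "\<dots> = cdf (betaM n k) q"
    proof -
      have "0 \<le> Bn n k (max 0 (min q 1))"
        using Q_cdf[of q] by (metis measure_nonneg)
      then show ?thesis unfolding cdf_def measure_def using betaM_Iic[OF k1 k_le_n, of q] by simp
    qed
    finally show "cdf (distr M borel Q) q = cdf (betaM n k) q" .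
  qed
qed

lemma Q_powr_nn:
  assumes "real k + a > 0"
  shows "(\<integral>\<^sup>+\<omega>. ennreal (Q \<omega> powr a) \<partial>M) = ennreal (\<Prod>j\<le>n-k. (real k + real j) / (real k + real j + a))"
proof -
  define c where "c = real n * real (n - 1 choose (k - 1))"
  have "(\<integral>\<^sup>+\<omega>. ennreal (Q \<omega> powr a) \<partial>M) = (\<integral>\<^sup>+x. ennreal (x powr a) \<partial>distr M borel Q)"
    by (subst nn_integral_distr) auto
  also have "\<dots> = (\<integral>\<^sup>+x. ennreal (x powr a) \<partial>betaM n k)" by (simp add: Q_distr)
  also have "\<dots> = (\<integral>\<^sup>+x. ennreal (indicator {0..1} x * betaD n k x) * ennreal (x powr a) \<partial>lborel)"
    unfolding betaM_def by (subst nn_integral_density) auto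
  also have "\<dots> = (\<integral>\<^sup>+x. ennreal (c * (x powr (real k + a - 1) * (1 - x) powr (real (n - k) + 1 - 1))) * indicator {0..1} x \<partial>lborel)"
  proof (intro nn_integral_cong_AE, rule AE_mp[OF AE_lborel_singleton[of 0]],
         rule AE_mp[OF AE_lborel_singleton[of 1]], intro AE_I2 impI)
    fix x :: real assume x: "x \<noteq> 0" "x \<noteq> 1"
    show "ennreal (indicator {0..1} x * betaD n k x) * ennreal (x powr a) =
      ennreal (c * (x powr (real k + a - 1) * (1 - x) powr (real (n - k) + 1 - 1))) * indicator {0..1} x"
    proof (cases "x \<in> {0..1}")
      case True
      then have x0: "0 < x" "x < 1" using x by auto
      have "betaD n k x * x powr a = c * (x powr (real k + a - 1) * (1 - x) powr (real (n - k) + 1 - 1))"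
        unfolding betaD_def c_def using x0 k1
        by (simp add: powr_realpow[symmetric] powr_add[symmetric] of_nat_diff algebra_simps)
      moreover have "ennreal (betaD n k x) * ennreal (x powr a) = ennreal (betaD n k x * x powr a)"
        using betaD_nonneg[of x n k] x0 by (simp add: ennreal_mult)
      ultimately show ?thesis using True by simp
    qed simp
  qed
  also have "\<dots> = ennreal (c * Beta (real k + a) (real (n - k) + 1))"
  proof (rule nn_integral_has_integral_lebesgue')
    show "((\<lambda>x. c * (x powr (real k + a - 1) * (1 - x) powr (real (n - k) + 1 - 1))) has_integral
        c * Beta (real k + a) (real (n - k) + 1)) {0..1}"
      by (rule has_integral_mult_right, rule has_integral_Beta_real) (use assms in auto)
  qed (auto simp: c_def)
  also have "c * Beta (real k + a) (real (n - k) + 1) = (\<Prod>j\<le>n-k. (real k + real j) / (real k + real j + a))"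
    unfolding c_def by (rule beta_prod[OF k1 k_le_n assms])
  finally show ?thesis .
qed

lemma Q_powr:
  assumes "real k + a > 0"
  shows "integrable M (\<lambda>\<omega>. Q \<omega> powr a)"
    and "(\<integral>\<omega>. Q \<omega> powr a \<partial>M) = (\<Prod>j\<le>n-k. (real k + real j) / (real k + real j + a))"
proof -
  have P: "0 \<le> (\<Prod>j\<le>n-k. (real k + real j) / (real k + real j + a))"
    using assms by (intro prod_nonneg) (auto intro!: divide_nonneg_pos)
  show "integrable M (\<lambda>\<omega>. Q \<omega> powr a)"
    by (rule integrableI_nonneg) (use Q_powr_nn[OF assms] in auto)
  show "(\<integral>\<omega>. Q \<omega> powr a \<partial>M) = (\<Prod>j\<le>n-k. (real k + real j) / (real k + real j + a))"
    by (subst integral_eq_nn_integral) (use Q_powr_nn[OF assms] P in auto)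
qed

end

lemma (in prob_space) exp_jensen:
  fixes Z :: "'a \<Rightarrow> real"
  assumes "integrable M Z" "integrable M (\<lambda>\<omega>. exp (Z \<omega>))"
  shows "exp (\<integral>\<omega>. Z \<omega> \<partial>M) \<le> (\<integral>\<omega>. exp (Z \<omega>) \<partial>M)"
proof -
  define c where "c = (\<integral>\<omega>. Z \<omega> \<partial>M)"
  have pt: "exp c * (1 + (Z \<omega> - c)) \<le> exp (Z \<omega>)" for \<omega>
  proof -
    have "exp c * (1 + (Z \<omega> - c)) \<le> exp c * exp (Z \<omega> - c)"
      by (intro mult_left_mono exp_ge_add_one_self) auto
    also have "\<dots> = exp (Z \<omega>)" by (simp add: exp_diff)
    finally show ?thesis .
  qed
  have "(\<integral>\<omega>. exp c * (1 + (Z \<omega> - c)) \<partial>M) \<le> (\<integral>\<omega>. exp (Z \<omega>) \<partial>M)"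
    by (intro integral_mono pt assms) (use assms in auto)
  moreover have "(\<integral>\<omega>. exp c * (1 + (Z \<omega> - c)) \<partial>M) = exp c"
  proof -
    have "(\<integral>\<omega>. exp c * (1 + (Z \<omega> - c)) \<partial>M) = exp c * (\<integral>\<omega>. (1 + (Z \<omega> - c)) \<partial>M)" by simp
    also have "(\<integral>\<omega>. (1 + (Z \<omega> - c)) \<partial>M) = 1 + ((\<integral>\<omega>. Z \<omega> \<partial>M) - c)"
      using assms(1) by (simp add: prob_space)
    finally show ?thesis unfolding c_def by simp
  qed
  ultimately show ?thesis unfolding c_def by simp
qed

lemma (in prob_space) chebyshev_threshold:
  fixes Y :: "'a \<Rightarrow> real" and g d :: "real \<Rightarrow> real"
  assumes Ynn: "AE \<omega> in M. 0 \<le> Y \<omega>"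
    and gmono: "\<And>x y. x \<le> y \<Longrightarrow> g x \<le> g y"
    and dmono: "\<And>x y. 0 \<le> x \<Longrightarrow> x \<le> y \<Longrightarrow> d x \<le> d y"
    and int1: "integrable M (\<lambda>\<omega>. g (Y \<omega>) * d (Y \<omega>))"
    and int2: "integrable M (\<lambda>\<omega>. g (Y \<omega>))"
    and int3: "integrable M (\<lambda>\<omega>. d (Y \<omega>))"
  shows "0 \<le> (\<integral>\<omega>. g (Y \<omega>) * (d (Y \<omega>) - (\<integral>\<omega>. d (Y \<omega>) \<partial>M)) \<partial>M)"
proof -
  define E0 where "E0 = (\<integral>\<omega>. d (Y \<omega>) \<partial>M)"
  define T where "T = {y. 0 \<le> y \<and> E0 \<le> d y}"
  have T_ne: "T \<noteq> {}"
  proof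
    assume T: "T = {}"
    have lt: "AE \<omega> in M. 0 < E0 - d (Y \<omega>)"
      using Ynn by eventually_elim (use T in \<open>auto simp: T_def\<close>)
    have "(\<integral>\<omega>. E0 - d (Y \<omega>) \<partial>M) = 0"
      using int3 by (simp add: prob_space E0_def)
    moreover have "integrable M (\<lambda>\<omega>. E0 - d (Y \<omega>))" using int3 by simp
    ultimately have "AE \<omega> in M. E0 - d (Y \<omega>) = 0"
    proof -
      have "AE \<omega> in M. 0 \<le> E0 - d (Y \<omega>)" using lt by eventually_elim simp
      then show ?thesis using integral_nonneg_eq_0_iff_AE[OF \<open>integrable M (\<lambda>\<omega>. E0 - d (Y \<omega>))\<close>]
        \<open>(\<integral>\<omega>. E0 - d (Y \<omega>) \<partial>M) = 0\<close> by simp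
    qed
    with lt have "AE \<omega> in M. False" by eventually_elim simp
    then show False by simp
  qed
  have T_bdd: "bdd_below T" unfolding T_def by (intro bdd_belowI[of _ 0]) auto
  define m where "m = Inf T"
  have pt: "0 \<le> (g y - g m) * (d y - E0)" if y: "0 \<le> y" for y
  proof (cases y m rule: linorder_cases)
    case less
    then have "y \<notin> T" using cInf_lower[OF _ T_bdd, of y] unfolding m_def by auto
    then have "d y < E0" using y unfolding T_def by auto
    moreover have "g y \<le> g m" using less gmono by simp
    ultimately show ?thesis by (intro mult_nonpos_nonpos) auto
  next
    case equal then show ?thesis by simp
  next
    case greater
    then obtain y' where y': "y' \<in> T" "y' < y" using cInf_less_iff[OF T_ne T_bdd] unfolding m_def by auto
    then have "E0 \<le> d y" using dmono[of y' y] unfolding T_def by auto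
    moreover have "g m \<le> g y" using greater gmono by simp
    ultimately show ?thesis by (intro mult_nonneg_nonneg) auto
  qed
  have "0 \<le> (\<integral>\<omega>. (g (Y \<omega>) - g m) * (d (Y \<omega>) - E0) \<partial>M)"
    by (rule integral_nonneg_AE) (use Ynn pt in \<open>auto elim!: AE_mp\<close>)
  also have "(\<integral>\<omega>. (g (Y \<omega>) - g m) * (d (Y \<omega>) - E0) \<partial>M)
      = (\<integral>\<omega>. g (Y \<omega>) * (d (Y \<omega>) - E0) \<partial>M) - g m * (\<integral>\<omega>. (d (Y \<omega>) - E0) \<partial>M)"
  proof -
    have "(\<lambda>\<omega>. (g (Y \<omega>) - g m) * (d (Y \<omega>) - E0)) = (\<lambda>\<omega>. g (Y \<omega>) * (d (Y \<omega>) - E0) - g m * (d (Y \<omega>) - E0))"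
      by (simp add: fun_eq_iff algebra_simps)
    moreover have "integrable M (\<lambda>\<omega>. g (Y \<omega>) * (d (Y \<omega>) - E0))"
      using int1 int2 by (simp add: algebra_simps)
    moreover have "integrable M (\<lambda>\<omega>. g m * (d (Y \<omega>) - E0))" using int3 by simp
    ultimately show ?thesis by simp
  qed
  also have "(\<integral>\<omega>. (d (Y \<omega>) - E0) \<partial>M) = 0"
    using int3 by (simp add: prob_space E0_def)
  finally show ?thesis unfolding E0_def by simp
qed

context ihr
begin

definition S :: "'a \<Rightarrow> real" where "S \<omega> = - ln (Q \<omega>)"
definition dd :: "real \<Rightarrow> real" where "dd y = - ln (G y) / L - y"

lemma S_meas[measurable]: "S \<in> borel_measurable M" unfolding S_def[abs_def] by measurable
lemma dd_meas[measurable]: "dd \<in> borel_measurable borel" unfolding dd_def[abs_def] by measurable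

lemma S_nonneg: "0 \<le> S \<omega>"
  unfolding S_def using Q_pos[of \<omega>] Q_le1[of \<omega>] by simp

lemma exp_S: "exp (a * S \<omega>) = Q \<omega> powr (- a)"
  unfolding S_def using Q_pos[of \<omega>] by (simp add: powr_def)

lemma S_le: assumes "0 < a" shows "S \<omega> \<le> Q \<omega> powr (- a) / a"
proof -
  have "a * S \<omega> \<le> exp (a * S \<omega>)"
    using exp_ge_add_one_self[of "a * S \<omega>"] by linarith
  then show ?thesis using assms exp_S[of a \<omega>] by (simp add: field_simps)
qed

lemma dd_mono: assumes "0 \<le> a" "a \<le> b" shows "dd a \<le> dd b"
proof -
  have "G b * exp (L * (b - a)) \<le> G a" by (rule G_exp[OF assms])
  then have "ln (G b * exp (L * (b - a))) \<le> ln (G a)"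
    using G_pos[of b] G_pos[of a] by (subst ln_le_cancel_iff) auto
  then have "ln (G b) + L * (b - a) \<le> ln (G a)"
    using G_pos[of b] by (simp add: ln_mult)
  then have "(- ln (G a)) / L \<le> (- ln (G b) - L * (b - a)) / L"
    using L_pos by (intro divide_right_mono) auto
  also have "\<dots> = - ln (G b) / L - (b - a)" using L_pos by (simp add: field_simps)
  finally show ?thesis unfolding dd_def by simp
qed

lemma dd0: "dd 0 = 0" unfolding dd_def using G_nonpos[of 0] by simp

lemma S_eq: "S \<omega> / L = Y \<omega> + dd (Y \<omega>)"
  unfolding S_def dd_def Q_def by simp

lemma Y_nn_AE: "AE \<omega> in M. 0 \<le> Y \<omega>"
proof -
  have "AE \<omega> in M. \<omega> \<in> {\<omega> \<in> space M. 0 \<le> Y \<omega>}"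
    by (rule AE_prob_1) (use Y_ge_prob'[of 0] G_nonpos[of 0] Bn_1[OF k_le_n] in simp)
  then show ?thesis by eventually_elim auto
qed

lemma dd_nn_AE: "AE \<omega> in M. 0 \<le> dd (Y \<omega>)"
  using Y_nn_AE by eventually_elim (use dd_mono[of 0] dd0 in auto)

lemma Q_powr_int: "real k + b > 0 \<Longrightarrow> integrable M (\<lambda>\<omega>. Q \<omega> powr b)"
  by (rule Q_powr(1))

lemma S_int: "integrable M S"
proof (rule Bochner_Integration.integrable_bound)
  show "integrable M (\<lambda>\<omega>. 2 * Q \<omega> powr (- (1/2)))"
    using Q_powr_int[of "- (1/2)"] k1 by simp
  show "AE \<omega> in M. norm (S \<omega>) \<le> norm (2 * Q \<omega> powr (- (1/2)))"
    using S_le[of "1/2"] S_nonneg by (intro AE_I2) (simp add: mult.commute)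
qed simp

lemma dd_int: "integrable M (\<lambda>\<omega>. dd (Y \<omega>))"
  and Y_int: "integrable M Y"
proof -
  show "integrable M Y"
  proof (rule Bochner_Integration.integrable_bound)
    show "integrable M (\<lambda>\<omega>. S \<omega> / L)" using S_int by simp
    show "AE \<omega> in M. norm (Y \<omega>) \<le> norm (S \<omega> / L)"
      using Y_nn_AE dd_nn_AE by eventually_elim (use S_eq S_nonneg L_pos in \<open>auto simp: abs_of_nonneg\<close>)
  qed simp
  then show "integrable M (\<lambda>\<omega>. dd (Y \<omega>))"
  proof -
    have "(\<lambda>\<omega>. dd (Y \<omega>)) = (\<lambda>\<omega>. S \<omega> / L - Y \<omega>)" using S_eq by (simp add: fun_eq_iff)
    then show ?thesis using S_int \<open>integrable M Y\<close> by simp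
  qed
qed

end

lemma ln_div_flip: "0 < (a::real) \<Longrightarrow> 0 < b \<Longrightarrow> ln (a / b) = - ln (b / a)"
  by (simp add: ln_div)

context ihr
begin

lemma ES_ge: "(\<Sum>j\<le>n-k. 1 / (real k + real j)) \<le> (\<integral>\<omega>. S \<omega> \<partial>M)"
proof -
  define H where "H = (\<Sum>j\<le>n-k. 1 / (real k + real j))"
  define ES where "ES = (\<integral>\<omega>. S \<omega> \<partial>M)"
  have sq: "(\<Sum>j\<le>n-k. (1 / (real k + real j))\<^sup>2) \<le> 2"
  proof -
    have "(\<Sum>j\<le>n-k. (1 / (real k + real j))\<^sup>2) = (\<Sum>j\<le>n-k. 1 / (real k + real j)\<^sup>2)"
      by (simp add: power_divide)
    also have "\<dots> \<le> 2 / real k - 1 / (real k + real (n - k))" by (rule sum_inv_sq[OF k1])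
    also have "\<dots> \<le> 2"
    proof -
      have "2 / real k \<le> 2" using k1 by (simp add: divide_le_eq)
      moreover have "0 \<le> 1 / (real k + real (n - k))" by simp
      ultimately show ?thesis by linarith
    qed
    finally show ?thesis .
  qed
  have key: "H - 2 * \<nu> \<le> ES" if nu: "0 < \<nu>" "\<nu> \<le> 1" for \<nu>
  proof -
    have iz: "integrable M (\<lambda>\<omega>. - \<nu> * S \<omega>)" using S_int by simp
    have ez: "(\<lambda>\<omega>. exp (- \<nu> * S \<omega>)) = (\<lambda>\<omega>. Q \<omega> powr \<nu>)"
      using exp_S[of "- \<nu>"] by (simp add: fun_eq_iff)
    have kn: "real k + \<nu> > 0" using nu by simp
    have "exp (\<integral>\<omega>. - \<nu> * S \<omega> \<partial>M) \<le> (\<integral>\<omega>. exp (- \<nu> * S \<omega>) \<partial>M)"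
      by (rule exp_jensen[OF iz]) (use ez Q_powr_int[OF kn] in simp)
    also have "\<dots> = (\<Prod>j\<le>n-k. (real k + real j) / (real k + real j + \<nu>))"
      using ez Q_powr(2)[OF kn] by simp
    finally have "exp (- \<nu> * ES) \<le> (\<Prod>j\<le>n-k. (real k + real j) / (real k + real j + \<nu>))"
      unfolding ES_def by simp
    then have "- \<nu> * ES \<le> ln (\<Prod>j\<le>n-k. (real k + real j) / (real k + real j + \<nu>))"
      using k1 nu by (subst ln_ge_iff) (auto intro!: prod_pos)
    also have "\<dots> = (\<Sum>j\<le>n-k. ln ((real k + real j) / (real k + real j + \<nu>)))"
      using k1 nu by (subst ln_prod) auto
    also have "\<dots> \<le> (\<Sum>j\<le>n-k. - (\<nu> * (1 / (real k + real j)) - \<nu>\<^sup>2 * (1 / (real k + real j))\<^sup>2))"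
    proof (rule sum_mono)
      fix j assume "j \<in> {..n-k}"
      define x where "x = \<nu> / (real k + real j)"
      have x: "0 \<le> x" "x \<le> 1" unfolding x_def using nu k1 by (auto simp: divide_le_eq)
      have "ln ((real k + real j) / (real k + real j + \<nu>)) = - ln ((real k + real j + \<nu>) / (real k + real j))"
        using k1 nu by (intro ln_div_flip) auto
      also have "(real k + real j + \<nu>) / (real k + real j) = 1 + x" unfolding x_def using k1 by (simp add: field_simps)
      finally have "ln ((real k + real j) / (real k + real j + \<nu>)) = - ln (1 + x)" .
      moreover have "x - x\<^sup>2 \<le> ln (1 + x)" by (rule ln_one_plus_pos_lower_bound[OF x])
      moreover have "x = \<nu> * (1 / (real k + real j))" "x\<^sup>2 = \<nu>\<^sup>2 * (1 / (real k + real j))\<^sup>2"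
        unfolding x_def by (simp_all add: power_divide)
      ultimately show "ln ((real k + real j) / (real k + real j + \<nu>)) \<le> - (\<nu> * (1 / (real k + real j)) - \<nu>\<^sup>2 * (1 / (real k + real j))\<^sup>2)"
        by simp
    qed
    also have "\<dots> = - \<nu> * H + \<nu>\<^sup>2 * (\<Sum>j\<le>n-k. (1 / (real k + real j))\<^sup>2)"
      unfolding H_def by (simp add: sum_subtractf sum_distrib_left sum_negf)
    also have "\<dots> \<le> - \<nu> * H + \<nu>\<^sup>2 * 2"
      using sq by (intro add_left_mono mult_left_mono) auto
    finally have "- \<nu> * ES \<le> - \<nu> * H + \<nu>\<^sup>2 * 2" .
    then have "\<nu> * (H - 2 * \<nu>) \<le> \<nu> * ES" by (simp add: power2_eq_square algebra_simps)
    then show ?thesis using nu by simp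
  qed
  show ?thesis
  proof (rule ccontr)
    assume "\<not> ?thesis"
    then have lt: "ES < H" unfolding H_def ES_def by simp
    define \<nu> where "\<nu> = min 1 ((H - ES) / 4)"
    have "0 < \<nu>" "\<nu> \<le> 1" using lt unfolding \<nu>_def by auto
    from key[OF this] have "H - 2 * \<nu> \<le> ES" .
    moreover have "\<nu> \<le> (H - ES) / 4" unfolding \<nu>_def by (rule min.cobounded2)
    ultimately show False using lt by simp
  qed
qed

end

context ihr
begin

lemma mgf_main:
  assumes l: "0 < l" and lk: "2 * (l / L) < real k"
  shows "integrable M (\<lambda>\<omega>. exp (l * (Y \<omega> - (\<integral>\<omega>. Y \<omega> \<partial>M))))"
    and "ln (\<integral>\<omega>. exp (l * (Y \<omega> - (\<integral>\<omega>. Y \<omega> \<partial>M))) \<partial>M) \<le> (l / L)\<^sup>2 / (real k - 2 * (l / L))"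
proof -
  define \<mu> where "\<mu> = l / L"
  define EY where "EY = (\<integral>\<omega>. Y \<omega> \<partial>M)"
  define Ed where "Ed = (\<integral>\<omega>. dd (Y \<omega>) \<partial>M)"
  define ES where "ES = (\<integral>\<omega>. S \<omega> \<partial>M)"
  define g where "g y = exp (l * (y - EY))" for y
  have mu: "0 < \<mu>" "2 * \<mu> < real k" using l lk L_pos unfolding \<mu>_def by auto
  have ES_eq: "ES / L = EY + Ed"
  proof -
    have "ES / L = (\<integral>\<omega>. S \<omega> / L \<partial>M)" unfolding ES_def by simp
    also have "\<dots> = (\<integral>\<omega>. Y \<omega> + dd (Y \<omega>) \<partial>M)" using S_eq by simp
    also have "\<dots> = EY + Ed" unfolding EY_def Ed_def using Y_int dd_int by simp
    finally show ?thesis .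
  qed
  have Y_le: "AE \<omega> in M. Y \<omega> \<le> S \<omega> / L"
    using dd_nn_AE by eventually_elim (use S_eq in simp)
  have gY_le: "AE \<omega> in M. g (Y \<omega>) \<le> exp (- l * EY) * Q \<omega> powr (- \<mu>)"
    using Y_le
  proof eventually_elim
    case (elim \<omega>)
    have "l * Y \<omega> \<le> l * (S \<omega> / L)" using elim l by (intro mult_left_mono) auto
    also have "l * (S \<omega> / L) = \<mu> * S \<omega>" unfolding \<mu>_def by simp
    finally have "l * (Y \<omega> - EY) \<le> \<mu> * S \<omega> + (- l * EY)" by (simp add: algebra_simps)
    then have "g (Y \<omega>) \<le> exp (\<mu> * S \<omega> + (- l * EY))" unfolding g_def by simp
    also have "\<dots> = exp (- l * EY) * Q \<omega> powr (- \<mu>)" unfolding exp_add exp_S by (rule mult.commute)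
    finally show ?case .
  qed
  have Qm: "integrable M (\<lambda>\<omega>. Q \<omega> powr (- \<mu>))" by (rule Q_powr_int) (use mu in simp)
  have Q2m: "integrable M (\<lambda>\<omega>. Q \<omega> powr (- (2 * \<mu>)))" by (rule Q_powr_int) (use mu in simp)
  have gY_int: "integrable M (\<lambda>\<omega>. g (Y \<omega>))"
  proof (rule Bochner_Integration.integrable_bound)
    show "integrable M (\<lambda>\<omega>. exp (- l * EY) * Q \<omega> powr (- \<mu>))" using Qm by simp
    show "AE \<omega> in M. norm (g (Y \<omega>)) \<le> norm (exp (- l * EY) * Q \<omega> powr (- \<mu>))"
      using gY_le by eventually_elim (simp add: g_def)
  qed (simp add: g_def)
  then show "integrable M (\<lambda>\<omega>. exp (l * (Y \<omega> - (\<integral>\<omega>. Y \<omega> \<partial>M))))" unfolding g_def EY_def .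
  have prod_int: "integrable M (\<lambda>\<omega>. g (Y \<omega>) * dd (Y \<omega>))"
  proof (rule Bochner_Integration.integrable_bound)
    show "integrable M (\<lambda>\<omega>. exp (- l * EY) / (\<mu> * L) * Q \<omega> powr (- (2 * \<mu>)))" using Q2m by simp
    show "AE \<omega> in M. norm (g (Y \<omega>) * dd (Y \<omega>)) \<le> norm (exp (- l * EY) / (\<mu> * L) * Q \<omega> powr (- (2 * \<mu>)))"
      using gY_le dd_nn_AE Y_nn_AE
    proof eventually_elim
      case (elim \<omega>)
      have d: "dd (Y \<omega>) \<le> Q \<omega> powr (- \<mu>) / (\<mu> * L)"
      proof -
        have "dd (Y \<omega>) \<le> S \<omega> / L" using S_eq elim by simp
        also have "\<dots> \<le> (Q \<omega> powr (- \<mu>) / \<mu>) / L"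
          using S_le[OF mu(1)] L_pos by (intro divide_right_mono) auto
        finally show ?thesis by simp
      qed
      have "g (Y \<omega>) * dd (Y \<omega>) \<le> (exp (- l * EY) * Q \<omega> powr (- \<mu>)) * (Q \<omega> powr (- \<mu>) / (\<mu> * L))"
        using elim d by (intro mult_mono) (auto simp: g_def)
      also have "\<dots> = exp (- l * EY) * (Q \<omega> powr (- \<mu>) * Q \<omega> powr (- \<mu>)) / (\<mu> * L)"
        by simp
      also have "Q \<omega> powr (- \<mu>) * Q \<omega> powr (- \<mu>) = Q \<omega> powr (- (2 * \<mu>))"
        by (simp add: powr_add[symmetric])
      also have "exp (- l * EY) * Q \<omega> powr (- (2 * \<mu>)) / (\<mu> * L) = exp (- l * EY) / (\<mu> * L) * Q \<omega> powr (- (2 * \<mu>))"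
        by simp
      moreover have "\<bar>\<mu> * L\<bar> = \<mu> * L" using mu L_pos by simp
      ultimately show ?case using elim by (simp add: g_def)
    qed
  qed (simp add: g_def)
  have cheb: "0 \<le> (\<integral>\<omega>. g (Y \<omega>) * (dd (Y \<omega>) - Ed) \<partial>M)"
    unfolding Ed_def
    by (rule chebyshev_threshold[OF Y_nn_AE _ dd_mono prod_int gY_int dd_int])
       (use l in \<open>simp add: g_def\<close>)
  have expS_eq: "(\<lambda>\<omega>. exp (\<mu> * (S \<omega> - ES))) = (\<lambda>\<omega>. exp (- \<mu> * ES) * Q \<omega> powr (- \<mu>))"
    by (simp add: fun_eq_iff exp_S[symmetric] exp_add[symmetric] algebra_simps)
  have expS_int: "integrable M (\<lambda>\<omega>. exp (\<mu> * (S \<omega> - ES)))" unfolding expS_eq using Qm by simp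
  have pt: "g (Y \<omega>) + l * (g (Y \<omega>) * (dd (Y \<omega>) - Ed)) \<le> exp (\<mu> * (S \<omega> - ES))" for \<omega>
  proof -
    have e: "\<mu> * (S \<omega> - ES) = l * (Y \<omega> - EY) + l * (dd (Y \<omega>) - Ed)"
    proof -
      have "\<mu> * (S \<omega> - ES) = l * (S \<omega> / L - ES / L)" unfolding \<mu>_def using L_pos by (simp add: field_simps)
      also have "\<dots> = l * (Y \<omega> - EY) + l * (dd (Y \<omega>) - Ed)" using S_eq[of \<omega>] ES_eq by (simp add: algebra_simps)
      finally show ?thesis .
    qed
    have "g (Y \<omega>) * (1 + l * (dd (Y \<omega>) - Ed)) \<le> g (Y \<omega>) * exp (l * (dd (Y \<omega>) - Ed))"
      by (intro mult_left_mono exp_ge_add_one_self) (simp add: g_def)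
    also have "\<dots> = exp (\<mu> * (S \<omega> - ES))" unfolding e g_def by (simp add: exp_add)
    finally show ?thesis by (simp add: algebra_simps)
  qed
  have int_lhs: "integrable M (\<lambda>\<omega>. g (Y \<omega>) * (dd (Y \<omega>) - Ed))"
    using prod_int gY_int by (simp add: algebra_simps)
  have "(\<integral>\<omega>. g (Y \<omega>) \<partial>M) + l * (\<integral>\<omega>. g (Y \<omega>) * (dd (Y \<omega>) - Ed) \<partial>M) \<le> (\<integral>\<omega>. exp (\<mu> * (S \<omega> - ES)) \<partial>M)"
  proof -
    have "(\<integral>\<omega>. g (Y \<omega>) + l * (g (Y \<omega>) * (dd (Y \<omega>) - Ed)) \<partial>M) \<le> (\<integral>\<omega>. exp (\<mu> * (S \<omega> - ES)) \<partial>M)"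
      by (rule integral_mono[OF _ expS_int pt]) (use gY_int int_lhs in simp)
    then show ?thesis using gY_int int_lhs by simp
  qed
  then have cmp: "(\<integral>\<omega>. g (Y \<omega>) \<partial>M) \<le> (\<integral>\<omega>. exp (\<mu> * (S \<omega> - ES)) \<partial>M)"
    using cheb l by (smt (verit) mult_nonneg_nonneg)
  have pos: "0 < (\<integral>\<omega>. g (Y \<omega>) \<partial>M)"
  proof -
    have "exp (\<integral>\<omega>. l * (Y \<omega> - EY) \<partial>M) \<le> (\<integral>\<omega>. exp (l * (Y \<omega> - EY)) \<partial>M)"
      by (rule exp_jensen) (use Y_int gY_int in \<open>simp_all add: g_def\<close>)
    then show ?thesis unfolding g_def by (smt (verit) exp_gt_zero)
  qed
  have rhs: "(\<integral>\<omega>. exp (\<mu> * (S \<omega> - ES)) \<partial>M) = exp (- \<mu> * ES) * (\<Prod>j\<le>n-k. (real k + real j) / (real k + real j - \<mu>))"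
    unfolding expS_eq using Q_powr(2)[of "- \<mu>"] mu by simp
  have xj: "0 < real k + real j - \<mu>" for j using mu by simp
  have "ln (\<integral>\<omega>. g (Y \<omega>) \<partial>M) \<le> ln (\<integral>\<omega>. exp (\<mu> * (S \<omega> - ES)) \<partial>M)"
    using cmp pos by simp
  also have "\<dots> = - \<mu> * ES + (\<Sum>j\<le>n-k. ln ((real k + real j) / (real k + real j - \<mu>)))"
  proof -
    have Ppos: "0 < (\<Prod>j\<le>n-k. (real k + real j) / (real k + real j - \<mu>))"
      by (intro prod_pos) (use xj k1 in auto)
    have "ln (exp (- \<mu> * ES) * (\<Prod>j\<le>n-k. (real k + real j) / (real k + real j - \<mu>)))
       = ln (exp (- \<mu> * ES)) + ln (\<Prod>j\<le>n-k. (real k + real j) / (real k + real j - \<mu>))"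
      by (rule ln_mult_pos) (use Ppos in auto)
    also have "ln (exp (- \<mu> * ES)) = - \<mu> * ES" by (rule ln_exp)
    also have "ln (\<Prod>j\<le>n-k. (real k + real j) / (real k + real j - \<mu>)) = (\<Sum>j\<le>n-k. ln ((real k + real j) / (real k + real j - \<mu>)))"
      by (rule ln_prod) (use xj k1 in \<open>auto simp: less_imp_neq[symmetric]\<close>)
    finally show ?thesis unfolding rhs .
  qed
  also have "\<dots> \<le> (\<Sum>j\<le>n-k. (- ln (1 - \<mu> / (real k + real j)) - \<mu> / (real k + real j)))"
  proof -
    have "- \<mu> * ES \<le> - \<mu> * (\<Sum>j\<le>n-k. 1 / (real k + real j))"
      using ES_ge mu unfolding ES_def by simp
    moreover have "ln ((real k + real j) / (real k + real j - \<mu>)) = - ln (1 - \<mu> / (real k + real j))" for j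
    proof -
      have "ln ((real k + real j) / (real k + real j - \<mu>)) = - ln ((real k + real j - \<mu>) / (real k + real j))"
        using xj[of j] k1 by (intro ln_div_flip) auto
      also have "(real k + real j - \<mu>) / (real k + real j) = 1 - \<mu> / (real k + real j)"
        using k1 by (simp add: field_simps)
      finally show ?thesis .
    qed
    ultimately show ?thesis by (simp add: sum_subtractf sum_distrib_left sum_negf)
  qed
  also have "\<dots> \<le> (\<Sum>j\<le>n-k. (\<mu>\<^sup>2 / (2 * (1 - \<mu> / real k))) * (1 / (real k + real j))\<^sup>2)"
  proof (rule sum_mono)
    fix j assume "j \<in> {..n-k}"
    define x where "x = \<mu> / (real k + real j)"
    have x0: "0 \<le> x" unfolding x_def using mu by simp
    have xk: "x \<le> \<mu> / real k" unfolding x_def using mu k1 by (intro divide_left_mono) auto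
    have xk1: "\<mu> / real k < 1" using mu k1 by (simp add: divide_less_eq)
    have x1: "x < 1" using xk xk1 by simp
    have "- ln (1 - x) - x \<le> x\<^sup>2 / (2 * (1 - x))" by (rule ln_ineq[OF x0 x1])
    also have "\<dots> \<le> x\<^sup>2 / (2 * (1 - \<mu> / real k))"
      using xk xk1 by (intro divide_left_mono mult_left_mono) auto
    also have "x\<^sup>2 = \<mu>\<^sup>2 * (1 / (real k + real j))\<^sup>2" unfolding x_def by (simp add: power_divide)
    finally show "- ln (1 - \<mu> / (real k + real j)) - \<mu> / (real k + real j) \<le> (\<mu>\<^sup>2 / (2 * (1 - \<mu> / real k))) * (1 / (real k + real j))\<^sup>2"
      unfolding x_def by simp
  qed
  also have "\<dots> = (\<mu>\<^sup>2 / (2 * (1 - \<mu> / real k))) * (\<Sum>j\<le>n-k. 1 / (real k + real j)\<^sup>2)"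
    by (simp add: sum_distrib_left power_divide)
  also have "\<dots> \<le> (\<mu>\<^sup>2 / (2 * (1 - \<mu> / real k))) * (2 / real k)"
  proof (rule mult_left_mono)
    show "(\<Sum>j\<le>n-k. 1 / (real k + real j)\<^sup>2) \<le> 2 / real k"
      using sum_inv_sq[OF k1, of "n-k"] k1 by (smt (verit) divide_nonneg_nonneg of_nat_0_le_iff)
    have "\<mu> / real k < 1" using mu k1 by (simp add: divide_less_eq)
    then show "0 \<le> \<mu>\<^sup>2 / (2 * (1 - \<mu> / real k))" by (intro divide_nonneg_pos) auto
  qed
  also have "\<dots> = \<mu>\<^sup>2 / (real k - \<mu>)" using mu k1 by (simp add: field_simps)
  also have "\<dots> \<le> \<mu>\<^sup>2 / (real k - 2 * \<mu>)" using mu by (intro divide_left_mono) auto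
  finally show "ln (\<integral>\<omega>. exp (l * (Y \<omega> - (\<integral>\<omega>. Y \<omega> \<partial>M))) \<partial>M) \<le> (l / L)\<^sup>2 / (real k - 2 * (l / L))"
    unfolding g_def EY_def \<mu>_def .
qed

end

lemma tail_alg:
  fixes v c g :: real
  assumes v: "0 < v" and c: "0 < c" and g: "0 \<le> g"
  defines "r \<equiv> sqrt (2 * v * g)"
  defines "s \<equiv> r / v"
  defines "l \<equiv> s / (1 + c * s)"
  shows "l\<^sup>2 * v / (2 * (1 - c * l)) - l * (r + c * g) = - g"
proof -
  have gv: "0 \<le> 2 * v * g" using mult_nonneg_nonneg[of v g] v g by simp
  have r2: "r\<^sup>2 = 2 * v * g" unfolding r_def using gv by (rule real_sqrt_pow2)
  have r0: "0 \<le> r" unfolding r_def using gv by simp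
  have s0: "0 \<le> s" unfolding s_def using r0 v by simp
  have d: "0 < 1 + c * s" using s0 c by (simp add: add_pos_nonneg)
  have cl: "1 - c * l = 1 / (1 + c * s)" unfolding l_def using d by (simp add: field_simps)
  have "l\<^sup>2 * v / (2 * (1 - c * l)) = (s\<^sup>2 / (1 + c * s)\<^sup>2) * v * (1 + c * s) / 2"
    unfolding cl unfolding l_def by (simp add: power_divide)
  also have "\<dots> = s\<^sup>2 * v / (2 * (1 + c * s))"
    using d by (simp add: power2_eq_square)
  also have "s\<^sup>2 * v = 2 * g" unfolding s_def using r2 v by (simp add: power_divide field_simps power2_eq_square)
  also have "2 * g / (2 * (1 + c * s)) = g / (1 + c * s)" using d by (auto simp: field_simps)
  finally have A: "l\<^sup>2 * v / (2 * (1 - c * l)) = g / (1 + c * s)" .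
  have "l * (r + c * g) = (s * r + c * s * g) / (1 + c * s)" unfolding l_def using d by (simp add: field_simps)
  also have "s * r = 2 * g" unfolding s_def using r2 v by (simp add: field_simps power2_eq_square)
  finally have B: "l * (r + c * g) = (2 * g + c * s * g) / (1 + c * s)" .
  have "g / (1 + c * s) - (2 * g + c * s * g) / (1 + c * s) = (g - (2 * g + c * s * g)) / (1 + c * s)"
    by (rule diff_divide_distrib[symmetric])
  also have "g - (2 * g + c * s * g) = - g * (1 + c * s)" by (simp add: algebra_simps)
  also have "- g * (1 + c * s) / (1 + c * s) = - g" using d by simp
  finally show ?thesis unfolding A B .
qed

lemma set_integrable_spaceI:
  fixes f :: "'a \<Rightarrow> real"
  assumes "integrable M f" shows "set_integrable M (space M) f"
  unfolding set_integrable_def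
  by (rule Bochner_Integration.integrable_cong[THEN iffD1, OF refl _ assms]) (auto simp: indicator_def)

theorem lemma1:
  fixes M :: "'a measure" and X :: "nat \<Rightarrow> 'a \<Rightarrow> real" and f :: "real \<Rightarrow> real" and L :: real
    and n k :: nat
  assumes prob: "prob_space M"
    and n2: "n \<ge> 2" and k1: "1 \<le> k" and kn: "k \<le> n - 1"
    and indep: "prob_space.indep_vars M (\<lambda>_. borel) X {..<n}"
    and dens: "\<And>i. i < n \<Longrightarrow> distributed M lborel (X i) (\<lambda>t. ennreal (f t))"
    and f_nonneg: "\<And>t. f t \<ge> 0"
    and support_lo: "\<And>t. t < 0 \<Longrightarrow> f t = 0"
    and support_hi: "\<And>t. t \<ge> 0 \<Longrightarrow> measure M {\<omega> \<in> space M. X 0 \<omega> \<le> t} < 1"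
    and IHR: "\<And>x1 x2. 0 \<le> x2 \<Longrightarrow> x2 \<le> x1 \<Longrightarrow>
        hazard f (\<lambda>t. measure M {\<omega> \<in> space M. X 0 \<omega> \<le> t}) x2
          \<le> hazard f (\<lambda>t. measure M {\<omega> \<in> space M. X 0 \<omega> \<le> t}) x1"
    and L_def: "L = (INF x\<in>{0..}. hazard f (\<lambda>t. measure M {\<omega> \<in> space M. X 0 \<omega> \<le> t}) x)"
    and L_pos: "L > 0"
  defines "Y \<equiv> (\<lambda>\<omega>. order_stat n k (\<lambda>i. X i \<omega>))"
    and "v \<equiv> 2 / (real k * L\<^sup>2)"
    and "c \<equiv> 2 / (real k * L)"
  shows "integrable M Y \<and>
    (\<forall>l. 0 \<le> l \<and> l < 1 / c \<longrightarrow>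
           integrable M (\<lambda>\<omega>. exp (l * (Y \<omega> - integral\<^sup>L M Y))) \<and>
           ln (integral\<^sup>L M (\<lambda>\<omega>. exp (l * (Y \<omega> - integral\<^sup>L M Y))))
             \<le> l\<^sup>2 * v / (2 * (1 - c * l))) \<and>
    (\<forall>g. 0 \<le> g \<longrightarrow>
           measure M {\<omega> \<in> space M. Y \<omega> - integral\<^sup>L M Y \<ge> sqrt (2 * v * g) + c * g}
             \<le> exp (- g))"
proof -
  interpret I: ihr M X f L n k
    using prob n2 k1 kn indep dens f_nonneg support_lo support_hi IHR L_def L_pos by (rule ihr.intro)
  have YY: "Y = I.Y" unfolding Y_def I.Y_def[abs_def] ..
  have v_pos: "0 < v" and c_pos: "0 < c" using L_pos k1 unfolding v_def c_def by auto
  have c_inv: "1 / c = real k * L / 2" unfolding c_def by simp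
  have int: "integrable M Y" unfolding YY by (rule I.Y_int)
  have mgf: "integrable M (\<lambda>\<omega>. exp (l * (Y \<omega> - integral\<^sup>L M Y))) \<and>
           ln (integral\<^sup>L M (\<lambda>\<omega>. exp (l * (Y \<omega> - integral\<^sup>L M Y))))
             \<le> l\<^sup>2 * v / (2 * (1 - c * l))" if l: "0 \<le> l" "l < 1 / c" for l
  proof (cases "l = 0")
    case True
    then show ?thesis by (simp add: I.prob_space)
  next
    case False
    then have l0: "0 < l" using l by simp
    have lk: "2 * (l / L) < real k" using l(2) L_pos unfolding c_inv by (simp add: field_simps)
    have eq: "l\<^sup>2 * v / (2 * (1 - c * l)) = (l / L)\<^sup>2 / (real k - 2 * (l / L))"
    proof -
      have d1: "real k * L - 2 * l > 0" using lk L_pos by (simp add: field_simps)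
      have "l\<^sup>2 * v / (2 * (1 - c * l)) = l\<^sup>2 / (L * (real k * L - 2 * l))"
        unfolding v_def c_def using L_pos k1 d1 by (simp add: field_simps power2_eq_square)
      also have "\<dots> = (l / L)\<^sup>2 / (real k - 2 * (l / L))"
        using L_pos k1 d1 by (simp add: field_simps power2_eq_square)
      finally show ?thesis .
    qed
    show ?thesis unfolding eq YY using I.mgf_main[OF l0 lk] by simp
  qed
  have tail: "measure M {\<omega> \<in> space M. Y \<omega> - integral\<^sup>L M Y \<ge> sqrt (2 * v * g) + c * g} \<le> exp (- g)"
    if g: "0 \<le> g" for g
  proof (cases "g = 0")
    case True
    then show ?thesis by simp
  next
    case False
    then have g0: "0 < g" using g by simp
    define r where "r = sqrt (2 * v * g)"
    define s where "s = r / v"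
    define l where "l = s / (1 + c * s)"
    have r0: "0 < r" unfolding r_def using v_pos g0 by simp
    have s0: "0 < s" unfolding s_def using r0 v_pos by simp
    have l0: "0 < l" unfolding l_def using s0 c_pos by (simp add: add_pos_pos)
    have lc: "l < 1 / c"
    proof -
      have "c * l = c * s / (1 + c * s)" unfolding l_def by simp
      also have "\<dots> < 1" using s0 c_pos by (simp add: divide_less_eq add_pos_pos)
      finally show ?thesis using c_pos by (simp add: field_simps)
    qed
    define W where "W \<omega> = Y \<omega> - integral\<^sup>L M Y" for \<omega>
    from mgf[OF less_imp_le[OF l0] lc] have iW: "integrable M (\<lambda>\<omega>. exp (l * W \<omega>))"
      and lnW: "ln (\<integral>\<omega>. exp (l * W \<omega>) \<partial>M) \<le> l\<^sup>2 * v / (2 * (1 - c * l))"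
      unfolding W_def by auto
    have posW: "0 < (\<integral>\<omega>. exp (l * W \<omega>) \<partial>M)"
    proof -
      have "exp (\<integral>\<omega>. l * W \<omega> \<partial>M) \<le> (\<integral>\<omega>. exp (l * W \<omega>) \<partial>M)"
        by (rule I.exp_jensen) (use int iW in \<open>simp_all add: W_def\<close>)
      then show ?thesis by (smt (verit) exp_gt_zero)
    qed
    have EW: "(\<integral>\<omega>. exp (l * W \<omega>) \<partial>M) \<le> exp (l\<^sup>2 * v / (2 * (1 - c * l)))"
      using lnW posW by (metis exp_le_cancel_iff exp_ln)
    have "measure M {\<omega> \<in> space M. W \<omega> \<ge> r + c * g} \<le> exp (- l * (r + c * g)) * (\<integral>\<omega>\<in>space M. exp (l * W \<omega>) \<partial>M)"
      by (rule I.Chernoff_ineq_ge[OF l0 set_integrable_spaceI[OF iW]]) simp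
    also have "(\<integral>\<omega>\<in>space M. exp (l * W \<omega>) \<partial>M) = (\<integral>\<omega>. exp (l * W \<omega>) \<partial>M)"
      by (rule set_integral_space[OF iW])
    also have "exp (- l * (r + c * g)) * (\<integral>\<omega>. exp (l * W \<omega>) \<partial>M) \<le> exp (- l * (r + c * g)) * exp (l\<^sup>2 * v / (2 * (1 - c * l)))"
      using EW by simp
    also have "\<dots> = exp (l\<^sup>2 * v / (2 * (1 - c * l)) - l * (r + c * g))"
      by (simp add: exp_add[symmetric])
    also have "l\<^sup>2 * v / (2 * (1 - c * l)) - l * (r + c * g) = - g"
      unfolding l_def s_def r_def by (rule tail_alg[OF v_pos c_pos g])
    finally show ?thesis unfolding W_def r_def .
  qed
  show ?thesis using int mgf tail by blast
qed

end
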